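(* Let $P$ be the uniform distribution on $[0,1]$ and let $\beta=\{\frac14,\frac12\}$. For $n\in\mathbb{N}$ with $n\geq 6$, let $\alpha_n$ be a conditional optimal set of $n$-points for $P$ with respect to $\beta$, and let $k=\mathrm{card}(\alpha_n\cap[0,\frac14])$, $\ell=\mathrm{card}(\alpha_n\cap[\frac14,\frac12])$, $m=\mathrm{card}(\alpha_n\cap[\frac12,1])$. For $x\in\mathbb{N}$: if $n=4x+2$ then $(k,\ell,m)=(x+1,x+2,2x+1)$; if $n=4x+3$ then $(k,\ell,m)=(x+1,x+2,2x+2)$; if $n=4x+4$ then $(k,\ell,m)=(x+2,x+2,2x+2)$; if $n=4x+5$ then $(k,\ell,m)=(x+2,x+2,2x+3)$.
   Context: Conditional quantization on $\mathbb{R}$: for a Borel probability measure $P$ on $\mathbb{R}$ and a finite set $\beta\subset\mathbb{R}$ with $\mathrm{card}(\beta)=r$, for $n\geq r$ the $n$th conditional quantization error is $V_n=\inf\{\int\min_{a\in\alpha\cup\beta}(x-a)^2\,dP(x):\alpha\subset\mathbb{R},\ \mathrm{card}(\alpha)\leq n-r\}$. A set $\alpha\cup\beta$ attaining this infimum, such that $P(M(b\mid\alpha\cup\beta))>0$ for every $b\in\beta$ (where $M(b\mid\Gamma)=\{x:|x-b|=\min_{c\in\Gamma}|x-c|\}$ is the Voronoi region of $b$), is called a conditional optimal set of $n$-points for $P$ with respect to $\beta$; it contains $\beta$. *)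

theory Defs
  imports "HOL-Analysis.Analysis"
begin

definition unif01 :: "real measure" where
  "unif01 = uniform_measure lborel {0..1}"

definition distortion :: "real measure \<Rightarrow> real set \<Rightarrow> real" where
  "distortion P \<Gamma> = (\<integral>x. Min ((\<lambda>a. (x - a)^2) ` \<Gamma>) \<partial>P)"

definition voronoi :: "real \<Rightarrow> real set \<Rightarrow> real set" where
  "voronoi b \<Gamma> = {x. \<bar>x - b\<bar> = Min ((\<lambda>c. \<bar>x - c\<bar>) ` \<Gamma>)}"

definition cond_qerror :: "real measure \<Rightarrow> real set \<Rightarrow> nat \<Rightarrow> real" where
  "cond_qerror P \<beta> n =
     Inf {distortion P (\<alpha> \<union> \<beta>) | \<alpha>. finite \<alpha> \<and> card \<alpha> \<le> n - card \<beta>}"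

definition cond_optimal_set :: "real measure \<Rightarrow> real set \<Rightarrow> nat \<Rightarrow> real set \<Rightarrow> bool" where
  "cond_optimal_set P \<beta> n \<Gamma> \<longleftrightarrow>
     (\<exists>\<alpha>. finite \<alpha> \<and> card \<alpha> \<le> n - card \<beta> \<and> \<Gamma> = \<alpha> \<union> \<beta>) \<and>
     distortion P \<Gamma> = cond_qerror P \<beta> n \<and>
     (\<forall>b\<in>\<beta>. measure P (voronoi b \<Gamma>) > 0)"

end

theory Submission
  imports Defs
begin


definition mind :: "real set \<Rightarrow> real \<Rightarrow> real" where
  "mind G x = Min ((\<lambda>a. (x-a)^2) ` G)"

lemma mind_le: "finite G \<Longrightarrow> a \<in> G \<Longrightarrow> mind G x \<le> (x-a)^2"
  unfolding mind_def by (rule Min_le) auto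

lemma mind_ge: "finite G \<Longrightarrow> G \<noteq> {} \<Longrightarrow> (\<And>a. a \<in> G \<Longrightarrow> g \<le> (x-a)^2) \<Longrightarrow> g \<le> mind G x"
  unfolding mind_def by (subst Min_ge_iff) auto

lemma mind_nonneg: "finite G \<Longrightarrow> G \<noteq> {} \<Longrightarrow> 0 \<le> mind G x"
  by (rule mind_ge) auto

lemma mind_insert_le: "finite G \<Longrightarrow> G \<noteq> {} \<Longrightarrow> mind (insert a G) x \<le> mind G x"
  unfolding mind_def by (rule Min_antimono) auto

lemma mind_cont: "finite G \<Longrightarrow> G \<noteq> {} \<Longrightarrow> continuous_on S (mind G)"
proof (induction G rule: finite_ne_induct)
  case (singleton a)
  then show ?case by (simp add: mind_def continuous_intros)
next
  case (insert a F)
  have "mind (insert a F) = (\<lambda>x. min ((x-a)^2) (mind F x))"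
    using insert by (auto simp: mind_def fun_eq_iff)
  then show ?case using insert by (auto intro!: continuous_intros)
qed

lemma mind_int: "finite G \<Longrightarrow> G \<noteq> {} \<Longrightarrow> mind G integrable_on {a..b}"
  by (intro integrable_continuous_interval mind_cont)

lemma int_sq_left: "(c::real) \<le> d \<Longrightarrow> integral {c..d} (\<lambda>x. (x-c)^2) = (d-c)^3/3"
proof -
  assume cd: "c \<le> d"
  have "((\<lambda>x. (x-c)^2) has_integral ((\<lambda>x. (x-c)^3/3) d - (\<lambda>x. (x-c)^3/3) c)) {c..d}"
    using cd by (intro fundamental_theorem_of_calculus)
       (auto intro!: derivative_eq_intros simp: has_real_derivative_iff_has_vector_derivative[symmetric] power2_eq_square)
  then show ?thesis by (simp add: integral_unique)
qed

lemma int_sq_right: "(c::real) \<le> d \<Longrightarrow> integral {c..d} (\<lambda>x. (x-d)^2) = (d-c)^3/3"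
proof -
  assume cd: "c \<le> d"
  have "((\<lambda>x. (x-d)^2) has_integral ((\<lambda>x. (x-d)^3/3) d - (\<lambda>x. (x-d)^3/3) c)) {c..d}"
    using cd by (intro fundamental_theorem_of_calculus)
       (auto intro!: derivative_eq_intros simp: has_real_derivative_iff_has_vector_derivative[symmetric] power2_eq_square)
  moreover have "(\<lambda>x. (x-d)^3/3) d - (\<lambda>x. (x-d)^3/3) c = (d-c)^3/3"
    by (simp add: power3_eq_cube field_simps)
  ultimately show ?thesis by (simp add: integral_unique)
qed

lemma sq_int: "(\<lambda>x. (x-c::real)^2) integrable_on {a..b}"
  by (intro integrable_continuous_interval continuous_intros)

lemma sq_le_of_abs: "\<bar>x - c\<bar> \<le> \<bar>x - a\<bar> \<Longrightarrow> (x - c)^2 \<le> ((x::real) - a)^2"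
  by (simp add: abs_le_square_iff)

lemma cell_lower:
  assumes fin: "finite G" and c: "c \<in> G" and e: "e \<in> G" and ce: "c \<le> e"
    and gap: "\<forall>a\<in>G. a \<le> c \<or> a \<ge> e"
  shows "(e-c)^3/12 \<le> integral {c..e} (mind G)"
proof -
  define m where "m = (c+e)/2"
  have cm: "c \<le> m" "m \<le> e" using ce by (auto simp: m_def)
  have G: "G \<noteq> {}" using c by auto
  have "integral {c..m} (\<lambda>x. (x-c)^2) \<le> integral {c..m} (mind G)"
  proof (rule integral_le[OF sq_int mind_int[OF fin G]])
    fix x assume x: "x \<in> {c..m}"
    show "(x-c)^2 \<le> mind G x"
    proof (rule mind_ge[OF fin G])
      fix a assume "a \<in> G"
      then have "a \<le> c \<or> a \<ge> e" using gap by auto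
      then show "(x-c)^2 \<le> (x-a)^2" using x by (intro sq_le_of_abs) (auto simp: m_def)
    qed
  qed
  moreover have "integral {m..e} (\<lambda>x. (x-e)^2) \<le> integral {m..e} (mind G)"
  proof (rule integral_le[OF sq_int mind_int[OF fin G]])
    fix x assume x: "x \<in> {m..e}"
    show "(x-e)^2 \<le> mind G x"
    proof (rule mind_ge[OF fin G])
      fix a assume "a \<in> G"
      then have "a \<le> c \<or> a \<ge> e" using gap by auto
      then show "(x-e)^2 \<le> (x-a)^2" using x by (intro sq_le_of_abs) (auto simp: m_def)
    qed
  qed
  moreover have "integral {c..m} (mind G) + integral {m..e} (mind G) = integral {c..e} (mind G)"
    using cm by (intro Henstock_Kurzweil_Integration.integral_combine mind_int[OF fin G])
  moreover have "(m-c)^3/3 + (e-m)^3/3 = (e-c)^3/12"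
    by (simp add: m_def power3_eq_cube field_simps)
  ultimately show ?thesis using int_sq_left[OF cm(1)] int_sq_right[OF cm(2)] by linarith
qed

lemma cell_upper:
  assumes fin: "finite G" and c: "c \<in> G" and e: "e \<in> G" and ce: "c \<le> e"
  shows "integral {c..e} (mind G) \<le> (e-c)^3/12"
proof -
  define m where "m = (c+e)/2"
  have cm: "c \<le> m" "m \<le> e" using ce by (auto simp: m_def)
  have G: "G \<noteq> {}" using c by auto
  have "integral {c..m} (mind G) \<le> integral {c..m} (\<lambda>x. (x-c)^2)"
    by (rule integral_le[OF mind_int[OF fin G] sq_int]) (rule mind_le[OF fin c])
  moreover have "integral {m..e} (mind G) \<le> integral {m..e} (\<lambda>x. (x-e)^2)"
    by (rule integral_le[OF mind_int[OF fin G] sq_int]) (rule mind_le[OF fin e])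
  moreover have "integral {c..m} (mind G) + integral {m..e} (mind G) = integral {c..e} (mind G)"
    using cm by (intro Henstock_Kurzweil_Integration.integral_combine mind_int[OF fin G])
  moreover have "(m-c)^3/3 + (e-m)^3/3 = (e-c)^3/12"
    by (simp add: m_def power3_eq_cube field_simps)
  ultimately show ?thesis using int_sq_left[OF cm(1)] int_sq_right[OF cm(2)] by linarith
qed

lemma endL_lower:
  assumes fin: "finite G" and p: "p \<in> G" and bp: "b \<le> p" and ge: "\<forall>a\<in>G. a \<ge> p"
  shows "(p-b)^3/3 \<le> integral {b..p} (mind G)"
proof -
  have G: "G \<noteq> {}" using p by auto
  have "integral {b..p} (\<lambda>x. (x-p)^2) \<le> integral {b..p} (mind G)"
  proof (rule integral_le[OF sq_int mind_int[OF fin G]])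
    fix x assume x: "x \<in> {b..p}"
    show "(x-p)^2 \<le> mind G x"
      by (rule mind_ge[OF fin G]) (use x ge in \<open>auto intro!: sq_le_of_abs\<close>)
  qed
  then show ?thesis using int_sq_right[OF bp] by linarith
qed

lemma endL_upper:
  assumes fin: "finite G" and p: "p \<in> G" and bp: "b \<le> p"
  shows "integral {b..p} (mind G) \<le> (p-b)^3/3"
proof -
  have G: "G \<noteq> {}" using p by auto
  have "integral {b..p} (mind G) \<le> integral {b..p} (\<lambda>x. (x-p)^2)"
    by (rule integral_le[OF mind_int[OF fin G] sq_int]) (rule mind_le[OF fin p])
  then show ?thesis using int_sq_right[OF bp] by linarith
qed

lemma endR_lower:
  assumes fin: "finite G" and p: "p \<in> G" and bp: "p \<le> b" and le: "\<forall>a\<in>G. a \<le> p"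
  shows "(b-p)^3/3 \<le> integral {p..b} (mind G)"
proof -
  have G: "G \<noteq> {}" using p by auto
  have "integral {p..b} (\<lambda>x. (x-p)^2) \<le> integral {p..b} (mind G)"
  proof (rule integral_le[OF sq_int mind_int[OF fin G]])
    fix x assume x: "x \<in> {p..b}"
    show "(x-p)^2 \<le> mind G x"
      by (rule mind_ge[OF fin G]) (use x le in \<open>auto intro!: sq_le_of_abs\<close>)
  qed
  then show ?thesis using int_sq_left[OF bp] by linarith
qed

lemma endR_upper:
  assumes fin: "finite G" and p: "p \<in> G" and bp: "p \<le> b"
  shows "integral {p..b} (mind G) \<le> (b-p)^3/3"
proof -
  have G: "G \<noteq> {}" using p by auto
  have "integral {p..b} (mind G) \<le> integral {p..b} (\<lambda>x. (x-p)^2)"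
    by (rule integral_le[OF mind_int[OF fin G] sq_int]) (rule mind_le[OF fin p])
  then show ?thesis using int_sq_left[OF bp] by linarith
qed

lemma holder3:
  fixes u v s t :: real
  assumes "0 \<le> u" "0 \<le> v" "0 < s" "0 < t"
  shows "(u+v)^3/(s+t)^2 \<le> u^3/s^2 + v^3/t^2"
proof -
  define w where "w = (u+v)/(s+t)"
  have w0: "0 \<le> w" using assms by (simp add: w_def)
  have key: "\<And>y r. 0 \<le> y \<Longrightarrow> 0 < r \<Longrightarrow> 3*w^2*y - 2*w^3*r \<le> y^3/r^2"
  proof -
    fix y r :: real assume y: "0 \<le> y" and r: "0 < r"
    have "y^3/r^2 - (3*w^2*y - 2*w^3*r) = (y - w*r)^2*(y + 2*w*r)/r^2"
      using r by (simp add: field_simps power2_eq_square power3_eq_cube)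
    moreover have "0 \<le> (y - w*r)^2*(y + 2*w*r)/r^2" using y r w0 by simp
    ultimately show "3*w^2*y - 2*w^3*r \<le> y^3/r^2" by linarith
  qed
  have uv: "u+v = w*(s+t)" using assms by (simp add: w_def)
  have "(u+v)^3/(s+t)^2 = w^3*(s+t)"
  proof -
    have st: "(s+t)^2 \<noteq> 0" using assms by simp
    show ?thesis unfolding uv divide_eq_eq using st by (simp add: power_mult_distrib power2_eq_square power3_eq_cube algebra_simps)
  qed
  also have "\<dots> = 3*w^2*(u+v) - 2*w^3*(s+t)"
    unfolding uv by (simp add: power2_eq_square power3_eq_cube algebra_simps)
  also have "\<dots> = (3*w^2*u - 2*w^3* s) + (3*w^2 * v - 2*w^3*t)" by (simp add: algebra_simps)
  also have "\<dots> \<le> u^3/s^2 + v^3/t^2" using key[of u s] key[of v t] assms by linarith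
  finally show ?thesis .
qed


lemma div12: "(x::real)/(12*y) = x/y/12" by simp

lemma both_lower:
  "finite G \<Longrightarrow> c \<in> G \<Longrightarrow> d \<in> G \<Longrightarrow> c \<le> d \<Longrightarrow> card (G \<inter> {c..d}) = j \<Longrightarrow>
   (d-c)^3/(12*(real j - 1)^2) \<le> integral {c..d} (mind G)"
proof (induction j arbitrary: c d rule: less_induct)
  case (less j)
  note fin = less.prems(1) and c = less.prems(2) and d = less.prems(3) and cd = less.prems(4)
    and card = less.prems(5)
  have G: "G \<noteq> {}" using c by auto
  show ?case
  proof (cases "c = d")
    case True then show ?thesis by simp
  next
    case False
    then have cd': "c < d" using cd by simp
    show ?thesis
    proof (cases "\<exists>e\<in>G. c < e \<and> e < d")
      case False
      then have gap: "\<forall>a\<in>G. a \<le> c \<or> a \<ge> d" by force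
      have "G \<inter> {c..d} = {c,d}" using gap c d cd' by force
      then have "j = 2" using card cd' by simp
      then show ?thesis using cell_lower[OF fin c d cd gap] by simp
    next
      case True
      then obtain e where e: "e \<in> G" "c < e" "e < d" by blast
      define j1 where "j1 = card (G \<inter> {c..e})"
      define j2 where "j2 = card (G \<inter> {e..d})"
      have un: "(G \<inter> {c..e}) \<union> (G \<inter> {e..d}) = G \<inter> {c..d}" using e by auto
      have int: "(G \<inter> {c..e}) \<inter> (G \<inter> {e..d}) = {e}" using e by auto
      have jj: "j1 + j2 = j + 1"
        using card_Un_Int[of "G \<inter> {c..e}" "G \<inter> {e..d}"] fin un int card
        by (simp add: j1_def j2_def)
      have "G \<inter> {c..e} \<subset> G \<inter> {c..d}"
      proof (rule psubsetI)
        show "G \<inter> {c..e} \<subseteq> G \<inter> {c..d}" using e by auto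
        have "d \<in> G \<inter> {c..d}" "d \<notin> G \<inter> {c..e}" using d cd e by auto
        then show "G \<inter> {c..e} \<noteq> G \<inter> {c..d}" by blast
      qed
      then have j1j: "j1 < j" unfolding j1_def card[symmetric]
        by (intro psubset_card_mono) (use fin in auto)
      have "G \<inter> {e..d} \<subset> G \<inter> {c..d}"
      proof (rule psubsetI)
        show "G \<inter> {e..d} \<subseteq> G \<inter> {c..d}" using e by auto
        have "c \<in> G \<inter> {c..d}" "c \<notin> G \<inter> {e..d}" using c cd e by auto
        then show "G \<inter> {e..d} \<noteq> G \<inter> {c..d}" by blast
      qed
      then have j2j: "j2 < j" unfolding j2_def card[symmetric]
        by (intro psubset_card_mono) (use fin in auto)
      have "card {c,e} \<le> j1" unfolding j1_def by (rule card_mono) (use fin c e in auto)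
      then have j1: "2 \<le> j1" using e by simp
      have "card {e,d} \<le> j2" unfolding j2_def by (rule card_mono) (use fin d e in auto)
      then have j2: "2 \<le> j2" using e by simp
      have I1: "(e-c)^3/(12*(real j1 - 1)^2) \<le> integral {c..e} (mind G)"
        using less.IH[OF j1j fin c e(1)] e j1_def by simp
      have I2: "(d-e)^3/(12*(real j2 - 1)^2) \<le> integral {e..d} (mind G)"
        using less.IH[OF j2j fin e(1) d] e j2_def by simp
      have comb: "integral {c..e} (mind G) + integral {e..d} (mind G) = integral {c..d} (mind G)"
        using e by (intro Henstock_Kurzweil_Integration.integral_combine mind_int[OF fin G]) auto
      have H: "((e-c)+(d-e))^3/((real j1 - 1)+(real j2 - 1))^2 \<le> (e-c)^3/(real j1 - 1)^2 + (d-e)^3/(real j2 - 1)^2"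
        using e j1 j2 by (intro holder3) auto
      have jr: "(real j1 - 1)+(real j2 - 1) = real j - 1" using jj by (simp add: algebra_simps)
      have "(d-c)^3/(12*(real j - 1)^2) = ((e-c)+(d-e))^3/((real j1 - 1)+(real j2 - 1))^2/12"
        unfolding jr div12 by simp
      moreover have "((e-c)+(d-e))^3/((real j1 - 1)+(real j2 - 1))^2/12 \<le> ((e-c)^3/(real j1 - 1)^2 + (d-e)^3/(real j2 - 1)^2)/12"
        using H by (rule divide_right_mono) simp
      ultimately show ?thesis using I1 I2 comb unfolding div12 add_divide_distrib by linarith
    qed
  qed
qed

lemma left_lower:
  assumes fin: "finite G" and d: "d \<in> G" and bd: "b \<le> d"
  defines "k \<equiv> card (G \<inter> {b..d})"
  shows "(d-b)^3/(12*(real k)^2) \<le> integral {b..d} (mind G)"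
    and "G \<inter> {..<b} = {} \<Longrightarrow> (d-b)^3/(3*(2*real k - 1)^2) \<le> integral {b..d} (mind G)"
proof -
  define S where "S = G \<inter> {b..d}"
  have S: "finite S" "S \<noteq> {}" "d \<in> S" using fin d bd by (auto simp: S_def)
  define p where "p = Min S"
  have pS: "p \<in> S" unfolding p_def using S by (intro Min_in) auto
  have pmin: "\<And>a. a \<in> S \<Longrightarrow> p \<le> a" unfolding p_def using S by auto
  have p: "p \<in> G" "b \<le> p" "p \<le> d" using pS by (auto simp: S_def)
  have G: "G \<noteq> {}" using d by auto
  have Sp: "G \<inter> {p..d} = S" using pmin p by (auto simp: S_def)
  have k1: "1 \<le> k" unfolding k_def using S by (simp add: S_def[symmetric] Suc_le_eq card_gt_0_iff)
  have I2: "(d-p)^3/(12*(real k - 1)^2) \<le> integral {p..d} (mind G)"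
    using both_lower[OF fin p(1) d p(3)] Sp by (simp add: k_def S_def)
  have comb: "integral {b..p} (mind G) + integral {p..d} (mind G) = integral {b..d} (mind G)"
    using p by (intro Henstock_Kurzweil_Integration.integral_combine mind_int[OF fin G]) auto
  have k1p: "k = 1 \<Longrightarrow> p = d"
  proof -
    assume "k = 1"
    then obtain z where "S = {z}" unfolding k_def S_def[symmetric] by (auto simp: card_Suc_eq)
    then show "p = d" using pS S by auto
  qed
  have gap: "\<forall>a\<in>insert b G. a \<le> b \<or> a \<ge> p"
  proof
    fix a assume "a \<in> insert b G"
    then show "a \<le> b \<or> a \<ge> p"
    proof
      assume aG: "a \<in> G"
      show ?thesis
      proof (cases "a < b")
        case False
        show ?thesis
        proof (cases "a \<le> d")
          case True
          then have "a \<in> S" using aG False by (auto simp: S_def)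
          then show ?thesis using pmin by auto
        qed (use p in auto)
      qed auto
    qed auto
  qed
  have "(p-b)^3/12 \<le> integral {b..p} (mind (insert b G))"
    using fin p by (intro cell_lower gap) auto
  also have "\<dots> \<le> integral {b..p} (mind G)"
    by (intro integral_le mind_int mind_insert_le) (use fin G in auto)
  finally have I1: "(p-b)^3/12 \<le> integral {b..p} (mind G)" .
  show "(d-b)^3/(12*(real k)^2) \<le> integral {b..d} (mind G)"
  proof (cases "k = 1")
    case True
    then show ?thesis using I1 comb k1p by simp
  next
    case False
    then have k2: "2 \<le> k" using k1 by simp
    have H: "((p-b)+(d-p))^3/(1+(real k - 1))^2 \<le> (p-b)^3/1^2 + (d-p)^3/(real k - 1)^2"
      using p k2 by (intro holder3) auto
    then show ?thesis using I1 I2 comb unfolding div12 by simp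
  qed
  assume L: "G \<inter> {..<b} = {}"
  have ge: "\<forall>a\<in>G. a \<ge> p"
  proof
    fix a assume a: "a \<in> G"
    then have "b \<le> a" using L by auto
    show "p \<le> a"
    proof (cases "a \<le> d")
      case True
      then have "a \<in> S" using a \<open>b \<le> a\<close> by (auto simp: S_def)
      then show ?thesis using pmin by auto
    qed (use p in auto)
  qed
  have I1': "(p-b)^3/3 \<le> integral {b..p} (mind G)"
    using endL_lower[OF fin p(1) p(2) ge] .
  show "(d-b)^3/(3*(2*real k - 1)^2) \<le> integral {b..d} (mind G)"
  proof (cases "k = 1")
    case True
    then show ?thesis using I1' comb k1p by simp
  next
    case False
    then have k2: "2 \<le> k" using k1 by simp
    have H: "((p-b)+(d-p))^3/(1/2+(real k - 1))^2 \<le> (p-b)^3/(1/2)^2 + (d-p)^3/(real k - 1)^2"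
      using p k2 by (intro holder3) auto
    have pos: "0 < 2*real k - 1" using k2 by simp
    have "1/2+(real k - 1) = (2*real k - 1)/2" by simp
    have gen: "\<And>X D::real. X/(3*D^2) = X/((D/2)^2)/12"
      by (simp add: power_divide)
    have e1: "(d-b)^3/(3*(2*real k - 1)^2) = ((p-b)+(d-p))^3/(1/2+(real k - 1))^2/12"
      unfolding \<open>1/2+(real k - 1) = (2*real k - 1)/2\<close> gen[symmetric] by simp
    have H2: "((p-b)+(d-p))^3/(1/2+(real k - 1))^2/12 \<le> ((p-b)^3/(1/2)^2 + (d-p)^3/(real k - 1)^2)/12"
      using H by (rule divide_right_mono) simp
    have e2: "(p-b)^3/3 = (p-b)^3/(1/2)^2/12" by (simp add: power2_eq_square field_simps)
    show ?thesis using H2 I1' I2 comb e1 e2 unfolding div12 add_divide_distrib by linarith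
  qed
qed


lemma right_lower:
  assumes fin: "finite G" and c: "c \<in> G" and ce: "c \<le> e"
  defines "m \<equiv> card (G \<inter> {c..e})"
  shows "(e-c)^3/(12*(real m)^2) \<le> integral {c..e} (mind G)"
    and "G \<inter> {e<..} = {} \<Longrightarrow> (e-c)^3/(3*(2*real m - 1)^2) \<le> integral {c..e} (mind G)"
proof -
  define S where "S = G \<inter> {c..e}"
  have S: "finite S" "S \<noteq> {}" "c \<in> S" using fin c ce by (auto simp: S_def)
  define p where "p = Max S"
  have pS: "p \<in> S" unfolding p_def using S by (intro Max_in) auto
  have pmax: "\<And>a. a \<in> S \<Longrightarrow> a \<le> p" unfolding p_def using S by auto
  have p: "p \<in> G" "c \<le> p" "p \<le> e" using pS by (auto simp: S_def)
  have G: "G \<noteq> {}" using c by auto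
  have Sp: "G \<inter> {c..p} = S" using pmax p by (auto simp: S_def)
  have m1: "1 \<le> m" unfolding m_def using S by (simp add: S_def[symmetric] Suc_le_eq card_gt_0_iff)
  have I1: "(p-c)^3/(12*(real m - 1)^2) \<le> integral {c..p} (mind G)"
    using both_lower[OF fin c p(1) p(2)] Sp by (simp add: m_def S_def)
  have comb: "integral {c..p} (mind G) + integral {p..e} (mind G) = integral {c..e} (mind G)"
    using p by (intro Henstock_Kurzweil_Integration.integral_combine mind_int[OF fin G]) auto
  have m1p: "m = 1 \<Longrightarrow> p = c"
  proof -
    assume "m = 1"
    then obtain z where "S = {z}" unfolding m_def S_def[symmetric] by (auto simp: card_Suc_eq)
    then show "p = c" using pS S by auto
  qed
  have gap: "\<forall>a\<in>insert e G. a \<le> p \<or> a \<ge> e"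
  proof
    fix a assume "a \<in> insert e G"
    then show "a \<le> p \<or> a \<ge> e"
    proof
      assume aG: "a \<in> G"
      show ?thesis
      proof (cases "a > e")
        case False
        show ?thesis
        proof (cases "c \<le> a")
          case True
          then have "a \<in> S" using aG False by (auto simp: S_def)
          then show ?thesis using pmax by auto
        qed (use p in auto)
      qed auto
    qed auto
  qed
  have "(e-p)^3/12 \<le> integral {p..e} (mind (insert e G))"
    using fin p by (intro cell_lower gap) auto
  also have "\<dots> \<le> integral {p..e} (mind G)"
    by (intro integral_le mind_int mind_insert_le) (use fin G in auto)
  finally have I2: "(e-p)^3/12 \<le> integral {p..e} (mind G)" .
  show "(e-c)^3/(12*(real m)^2) \<le> integral {c..e} (mind G)"
  proof (cases "m = 1")
    case True
    then show ?thesis using I2 comb m1p by simp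
  next
    case False
    then have m2: "2 \<le> m" using m1 by simp
    have H: "((e-p)+(p-c))^3/(1+(real m - 1))^2 \<le> (e-p)^3/1^2 + (p-c)^3/(real m - 1)^2"
      using p m2 by (intro holder3) auto
    have H2: "((e-p)+(p-c))^3/(1+(real m - 1))^2/12 \<le> ((e-p)^3/1^2 + (p-c)^3/(real m - 1)^2)/12"
      using H by (rule divide_right_mono) simp
    then show ?thesis using I1 I2 comb unfolding div12 add_divide_distrib by simp
  qed
  assume R: "G \<inter> {e<..} = {}"
  have le: "\<forall>a\<in>G. a \<le> p"
  proof
    fix a assume a: "a \<in> G"
    then have "a \<le> e" using R by auto
    show "a \<le> p"
    proof (cases "c \<le> a")
      case True
      then have "a \<in> S" using a \<open>a \<le> e\<close> by (auto simp: S_def)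
      then show ?thesis using pmax by auto
    qed (use p in auto)
  qed
  have I2': "(e-p)^3/3 \<le> integral {p..e} (mind G)"
    using endR_lower[OF fin p(1) p(3) le] .
  show "(e-c)^3/(3*(2*real m - 1)^2) \<le> integral {c..e} (mind G)"
  proof (cases "m = 1")
    case True
    then show ?thesis using I2' comb m1p by simp
  next
    case False
    then have m2: "2 \<le> m" using m1 by simp
    have H: "((e-p)+(p-c))^3/(1/2+(real m - 1))^2 \<le> (e-p)^3/(1/2)^2 + (p-c)^3/(real m - 1)^2"
      using p m2 by (intro holder3) auto
    have "1/2+(real m - 1) = (2*real m - 1)/2" by simp
    have gen: "\<And>X D::real. X/(3*D^2) = X/((D/2)^2)/12"
      by (simp add: power_divide)
    have e1: "(e-c)^3/(3*(2*real m - 1)^2) = ((e-p)+(p-c))^3/(1/2+(real m - 1))^2/12"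
      unfolding \<open>1/2+(real m - 1) = (2*real m - 1)/2\<close> gen[symmetric] by simp
    have H2: "((e-p)+(p-c))^3/(1/2+(real m - 1))^2/12 \<le> ((e-p)^3/(1/2)^2 + (p-c)^3/(real m - 1)^2)/12"
      using H by (rule divide_right_mono) simp
    have e2: "(e-p)^3/3 = (e-p)^3/(1/2)^2/12" by (simp add: power2_eq_square field_simps)
    show ?thesis using H2 I1 I2' comb e1 e2 unfolding div12 add_divide_distrib by linarith
  qed
qed

lemma both_upper:
  "finite G \<Longrightarrow> 0 \<le> h \<Longrightarrow> (\<forall>i\<le>j. c + real i * h \<in> G) \<Longrightarrow>
   integral {c..c + real j * h} (mind G) \<le> real j * h^3/12"
proof (induction j arbitrary: c)
  case 0 then show ?case by simp
next
  case (Suc j)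
  have c: "c \<in> G" using Suc.prems(3) by force
  have ch: "c + h \<in> G" using Suc.prems(3) by force
  have G: "G \<noteq> {}" using c by auto
  have "\<forall>i\<le>j. (c + h) + real i * h \<in> G"
  proof (intro allI impI)
    fix i assume "i \<le> j"
    then have "c + real (Suc i) * h \<in> G" using Suc.prems(3) by auto
    then show "(c + h) + real i * h \<in> G" by (simp add: algebra_simps)
  qed
  then have IH: "integral {c+h..(c+h) + real j * h} (mind G) \<le> real j * h^3/12"
    using Suc.IH Suc.prems by blast
  have cell: "integral {c..c+h} (mind G) \<le> ((c+h)-c)^3/12"
    using Suc.prems by (intro cell_upper c ch) auto
  have eq: "c + real (Suc j) * h = (c+h) + real j * h" by (simp add: algebra_simps)
  have comb: "integral {c..c+h} (mind G) + integral {c+h..(c+h) + real j * h} (mind G) = integral {c..(c+h) + real j * h} (mind G)"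
    using Suc.prems by (intro Henstock_Kurzweil_Integration.integral_combine mind_int[OF Suc.prems(1) G]) auto
  show ?case unfolding eq using IH cell comb by (simp add: algebra_simps add_divide_distrib)
qed

lemma distortion_eq:
  assumes fin: "finite G" and G: "G \<noteq> {}"
  shows "distortion unif01 G = integral {0..1} (mind G)"
proof -
  have U: "unif01 = density lborel (\<lambda>x. ennreal (indicator {0..1::real} x))"
    unfolding unif01_def uniform_measure_def by (simp add: ennreal_indicator divide_ennreal_def)
  have cont: "continuous_on UNIV (mind G)" by (rule mind_cont[OF fin G])
  have meas: "mind G \<in> borel_measurable lborel"
    using borel_measurable_continuous_onI[OF cont] by simp
  have "distortion unif01 G = (\<integral>x. mind G x \<partial>unif01)"
    unfolding distortion_def mind_def ..
  also have "\<dots> = (\<integral>x. indicator {0..1::real} x *\<^sub>R mind G x \<partial>lborel)"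
    unfolding U by (rule integral_density) (use meas in auto)
  also have "\<dots> = set_lebesgue_integral lborel {0..1} (mind G)"
    unfolding set_lebesgue_integral_def ..
  also have "\<dots> = integral {0..1} (mind G)"
    by (rule set_borel_integral_eq_integral(2)[OF borel_integrable_atLeastAtMost'])
       (rule mind_cont[OF fin G])
  finally show ?thesis .
qed



definition Dif :: "(nat \<Rightarrow> real) \<Rightarrow> nat \<Rightarrow> real" where
  "Dif \<phi> j = \<phi> (Suc j) - \<phi> j"

definition dconv :: "(nat \<Rightarrow> real) \<Rightarrow> nat \<Rightarrow> bool" where
  "dconv \<phi> d0 \<longleftrightarrow> (\<forall>j\<ge>d0. Dif \<phi> j \<le> Dif \<phi> (Suc j))"

lemma dconv_mono: "dconv \<phi> d0 \<Longrightarrow> d0 \<le> i \<Longrightarrow> Dif \<phi> i \<le> Dif \<phi> (i + d)"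
proof (induction d)
  case 0 then show ?case by simp
next
  case (Suc d)
  then have "Dif \<phi> (i + d) \<le> Dif \<phi> (Suc (i + d))" unfolding dconv_def by auto
  then show ?case using Suc by simp
qed

lemma conv_up: "dconv \<phi> d0 \<Longrightarrow> d0 \<le> x \<Longrightarrow> Dif \<phi> x * real d \<le> \<phi> (x + d) - \<phi> x"
proof (induction d)
  case 0 then show ?case by simp
next
  case (Suc d)
  have "Dif \<phi> x \<le> Dif \<phi> (x + d)" using dconv_mono[OF Suc.prems] .
  moreover have "\<phi> (x + Suc d) - \<phi> x = (\<phi> (x + d) - \<phi> x) + Dif \<phi> (x + d)"
    by (simp add: Dif_def)
  ultimately show ?case using Suc by (simp add: algebra_simps)
qed

lemma conv_down: "dconv \<phi> d0 \<Longrightarrow> d0 \<le> y \<Longrightarrow> - (Dif \<phi> (y + d - 1) * real d) \<le> \<phi> y - \<phi> (y + d)"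
proof (induction d)
  case 0 then show ?case by simp
next
  case (Suc d)
  have IH: "- (Dif \<phi> (y + d - 1) * real d) \<le> \<phi> y - \<phi> (y + d)" using Suc by simp
  have "Dif \<phi> (y + d - 1) * real d \<le> Dif \<phi> (y + d) * real d"
  proof (cases d)
    case 0 then show ?thesis by simp
  next
    case (Suc d')
    then have "Dif \<phi> (y + d - 1) \<le> Dif \<phi> (y + d - 1 + 1)"
      using dconv_mono[OF Suc.prems(1), of "y + d - 1" 1] Suc.prems by simp
    then show ?thesis using Suc by (intro mult_right_mono) auto
  qed
  moreover have "\<phi> y - \<phi> (y + Suc d) = (\<phi> y - \<phi> (y + d)) - Dif \<phi> (y + d)"
    by (simp add: Dif_def)
  ultimately show ?case using IH by (simp add: algebra_simps)
qed

lemma one_step: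
  assumes cv: "dconv \<phi> d0" and a: "d0 + 1 \<le> a" and y: "d0 \<le> y"
    and l1: "Dif \<phi> (a - 1) < lam" and l2: "lam < Dif \<phi> a"
  shows "lam * (real y - real a) \<le> \<phi> y - \<phi> a"
    and "y \<noteq> a \<Longrightarrow> lam * (real y - real a) < \<phi> y - \<phi> a"
proof -
  have "lam * (real y - real a) \<le> \<phi> y - \<phi> a \<and> (y \<noteq> a \<longrightarrow> lam * (real y - real a) < \<phi> y - \<phi> a)"
  proof (cases "a \<le> y")
    case True
    then obtain d where d: "y = a + d" using le_Suc_ex by blast
    have "Dif \<phi> a * real d \<le> \<phi> (a + d) - \<phi> a" using conv_up[OF cv] a by simp
    moreover have "lam * real d \<le> Dif \<phi> a * real d" using l2 by (intro mult_right_mono) auto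
    moreover have "d \<noteq> 0 \<Longrightarrow> lam * real d < Dif \<phi> a * real d" using l2 by simp
    ultimately have "lam * real d \<le> \<phi> (a + d) - \<phi> a" "d \<noteq> 0 \<Longrightarrow> lam * real d < \<phi> (a + d) - \<phi> a"
      by linarith+
    then show ?thesis using d by auto
  next
    case False
    then obtain d where d: "a = y + d" "d \<noteq> 0" using le_Suc_ex[of y a] by force
    have "- (Dif \<phi> (y + d - 1) * real d) \<le> \<phi> y - \<phi> (y + d)" using conv_down[OF cv y] .
    moreover have "Dif \<phi> (y + d - 1) * real d < lam * real d" using l1 d by simp
    ultimately have "lam * real d > \<phi> (y + d) - \<phi> y" by linarith
    moreover have "real y - real a = - real d" using d by simp
    ultimately show ?thesis using d by (auto simp: algebra_simps)
  qed
  then show "lam * (real y - real a) \<le> \<phi> y - \<phi> a"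
    and "y \<noteq> a \<Longrightarrow> lam * (real y - real a) < \<phi> y - \<phi> a" by auto
qed

lemma sep:
  assumes c1: "dconv \<phi>1 d1" and c2: "dconv \<phi>2 d2" and c3: "dconv \<phi>3 d3"
    and a: "d1 + 1 \<le> a1" "d2 + 1 \<le> a2" "d3 + 1 \<le> a3"
    and y: "d1 \<le> y1" "d2 \<le> y2" "d3 \<le> y3"
    and lam1: "Dif \<phi>1 (a1 - 1) < lam" "lam < Dif \<phi>1 a1"
    and lam2: "Dif \<phi>2 (a2 - 1) < lam" "lam < Dif \<phi>2 a2"
    and lam3: "Dif \<phi>3 (a3 - 1) < lam" "lam < Dif \<phi>3 a3"
    and neg: "lam < 0"
    and sum: "y1 + y2 + y3 \<le> a1 + a2 + a3"
    and val: "\<phi>1 y1 + \<phi>2 y2 + \<phi>3 y3 \<le> \<phi>1 a1 + \<phi>2 a2 + \<phi>3 a3"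
  shows "y1 = a1 \<and> y2 = a2 \<and> y3 = a3"
proof (rule ccontr)
  assume ne: "\<not> (y1 = a1 \<and> y2 = a2 \<and> y3 = a3)"
  note s1 = one_step[OF c1 a(1) y(1) lam1] and s2 = one_step[OF c2 a(2) y(2) lam2]
    and s3 = one_step[OF c3 a(3) y(3) lam3]
  have "real y1 + real y2 + real y3 \<le> real a1 + real a2 + real a3"
    using sum by (simp only: of_nat_add[symmetric] of_nat_le_iff)
  then have "0 \<le> lam * ((real y1 - real a1) + (real y2 - real a2) + (real y3 - real a3))"
    using neg by (intro mult_nonpos_nonpos) auto
  then have 0: "0 \<le> lam * (real y1 - real a1) + lam * (real y2 - real a2) + lam * (real y3 - real a3)"
    by (simp add: algebra_simps)
  have "lam * (real y1 - real a1) + lam * (real y2 - real a2) + lam * (real y3 - real a3)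
        < (\<phi>1 y1 - \<phi>1 a1) + (\<phi>2 y2 - \<phi>2 a2) + (\<phi>3 y3 - \<phi>3 a3)"
    using ne s1 s2 s3 by (cases "y1 = a1"; cases "y2 = a2"; cases "y3 = a3") (auto intro: add_less_le_mono add_le_less_mono add_mono)
  then show False using 0 val by linarith
qed


definition f1 :: "nat \<Rightarrow> real" where "f1 k = 1/(2*real k - 1)^2"
definition f2 :: "nat \<Rightarrow> real" where "f2 l = 1/(2*real l - 2)^2"
definition f3 :: "nat \<Rightarrow> real" where "f3 m = 8/(2*real m - 1)^2"

lemma pl_2_1_1:
  fixes T :: real assumes T: "0 \<le> T"
  shows "1/(2*T+3)^2 + 1/(2*T+3)^2 < 1/(2*T+5)^2 + 1/(2*T+1)^2"
proof -
  have "0 < 1656 + 4800*T + 5056*T^2 + 2304*T^3 + 384*T^4" using T by (intro add_pos_nonneg) auto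
  moreover have "(1/(2*T+5)^2 + 1/(2*T+1)^2) - (1/(2*T+3)^2 + 1/(2*T+3)^2) = (1656 + 4800*T + 5056*T^2 + 2304*T^3 + 384*T^4) / ((2*T+5)^2 * (2*T+1)^2 * (2*T+3)^2 * (2*T+3)^2)"
    using T by (simp add: field_simps) (simp add: algebra_simps power2_eq_square power3_eq_cube power4_eq_xxxx eval_nat_numeral)
  moreover have "0 < (2*T+5)^2 * (2*T+1)^2 * (2*T+3)^2 * (2*T+3)^2" using T by simp
  ultimately show ?thesis by (smt (verit) divide_pos_pos)
qed

lemma dl_2_1_1:
  assumes x: "1 \<le> x"
  shows "Dif f1 (x + 1 - 1) < Dif f1 (x + 1)"
proof -
  define T where "T = real x - 1"
  have T: "0 \<le> T" using x by (simp add: T_def)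
  have e0: "f1 (x + 1) = 1/(2*T+3)^2" unfolding f1_def T_def using x by (simp add: algebra_simps of_nat_diff)
  have e1: "f1 (x + 1) = 1/(2*T+3)^2" unfolding f1_def T_def using x by (simp add: algebra_simps of_nat_diff)
  have e2: "f1 (Suc (x + 1)) = 1/(2*T+5)^2" unfolding f1_def T_def using x by (simp add: algebra_simps of_nat_diff)
  have e3: "f1 (x + 1 - 1) = 1/(2*T+1)^2" unfolding f1_def T_def using x by (simp add: algebra_simps of_nat_diff)
  have s: "Suc (x + 1 - 1) = x + 1" by simp
  show ?thesis using pl_2_1_1[OF T] e0 e1 e2 e3 unfolding Dif_def s by linarith
qed

lemma pl_2_1_2:
  fixes T :: real assumes T: "0 \<le> T"
  shows "1/(2*T+3)^2 + 1/(2*T+4)^2 < 1/(2*T+6)^2 + 1/(2*T+1)^2"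
proof -
  have "0 < 4428 + 11256*T + 10272*T^2 + 4032*T^3 + 576*T^4" using T by (intro add_pos_nonneg) auto
  moreover have "(1/(2*T+6)^2 + 1/(2*T+1)^2) - (1/(2*T+3)^2 + 1/(2*T+4)^2) = (4428 + 11256*T + 10272*T^2 + 4032*T^3 + 576*T^4) / ((2*T+6)^2 * (2*T+1)^2 * (2*T+3)^2 * (2*T+4)^2)"
    using T by (simp add: field_simps) (simp add: algebra_simps power2_eq_square power3_eq_cube power4_eq_xxxx eval_nat_numeral)
  moreover have "0 < (2*T+6)^2 * (2*T+1)^2 * (2*T+3)^2 * (2*T+4)^2" using T by simp
  ultimately show ?thesis by (smt (verit) divide_pos_pos)
qed

lemma dl_2_1_2:
  assumes x: "1 \<le> x"
  shows "Dif f1 (x + 1 - 1) < Dif f2 (x + 2)"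
proof -
  define T where "T = real x - 1"
  have T: "0 \<le> T" using x by (simp add: T_def)
  have e0: "f1 (x + 1) = 1/(2*T+3)^2" unfolding f1_def T_def using x by (simp add: algebra_simps of_nat_diff)
  have e1: "f2 (x + 2) = 1/(2*T+4)^2" unfolding f2_def T_def using x by (simp add: algebra_simps of_nat_diff)
  have e2: "f2 (Suc (x + 2)) = 1/(2*T+6)^2" unfolding f2_def T_def using x by (simp add: algebra_simps of_nat_diff)
  have e3: "f1 (x + 1 - 1) = 1/(2*T+1)^2" unfolding f1_def T_def using x by (simp add: algebra_simps of_nat_diff)
  have s: "Suc (x + 1 - 1) = x + 1" by simp
  show ?thesis using pl_2_1_2[OF T] e0 e1 e2 e3 unfolding Dif_def s by linarith
qed

lemma pl_2_1_3:
  fixes T :: real assumes T: "0 \<le> T"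
  shows "1/(2*T+3)^2 + 8/(4*T+5)^2 < 8/(4*T+7)^2 + 1/(2*T+1)^2"
proof -
  have "0 < 8072 + 26312*T + 31232*T^2 + 16128*T^3 + 3072*T^4" using T by (intro add_pos_nonneg) auto
  moreover have "(8/(4*T+7)^2 + 1/(2*T+1)^2) - (1/(2*T+3)^2 + 8/(4*T+5)^2) = (8072 + 26312*T + 31232*T^2 + 16128*T^3 + 3072*T^4) / ((4*T+7)^2 * (2*T+1)^2 * (2*T+3)^2 * (4*T+5)^2)"
    using T by (simp add: field_simps) (simp add: algebra_simps power2_eq_square power3_eq_cube power4_eq_xxxx eval_nat_numeral)
  moreover have "0 < (4*T+7)^2 * (2*T+1)^2 * (2*T+3)^2 * (4*T+5)^2" using T by simp
  ultimately show ?thesis by (smt (verit) divide_pos_pos)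
qed

lemma dl_2_1_3:
  assumes x: "1 \<le> x"
  shows "Dif f1 (x + 1 - 1) < Dif f3 (2 * x + 1)"
proof -
  define T where "T = real x - 1"
  have T: "0 \<le> T" using x by (simp add: T_def)
  have e0: "f1 (x + 1) = 1/(2*T+3)^2" unfolding f1_def T_def using x by (simp add: algebra_simps of_nat_diff)
  have e1: "f3 (2 * x + 1) = 8/(4*T+5)^2" unfolding f3_def T_def using x by (simp add: algebra_simps of_nat_diff)
  have e2: "f3 (Suc (2 * x + 1)) = 8/(4*T+7)^2" unfolding f3_def T_def using x by (simp add: algebra_simps of_nat_diff)
  have e3: "f1 (x + 1 - 1) = 1/(2*T+1)^2" unfolding f1_def T_def using x by (simp add: algebra_simps of_nat_diff)
  have s: "Suc (x + 1 - 1) = x + 1" by simp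
  show ?thesis using pl_2_1_3[OF T] e0 e1 e2 e3 unfolding Dif_def s by linarith
qed

lemma pl_2_2_1:
  fixes T :: real assumes T: "0 \<le> T"
  shows "1/(2*T+4)^2 + 1/(2*T+3)^2 < 1/(2*T+5)^2 + 1/(2*T+2)^2"
proof -
  have "0 < 1676 + 3976*T + 3488*T^2 + 1344*T^3 + 192*T^4" using T by (intro add_pos_nonneg) auto
  moreover have "(1/(2*T+5)^2 + 1/(2*T+2)^2) - (1/(2*T+4)^2 + 1/(2*T+3)^2) = (1676 + 3976*T + 3488*T^2 + 1344*T^3 + 192*T^4) / ((2*T+5)^2 * (2*T+2)^2 * (2*T+4)^2 * (2*T+3)^2)"
    using T by (simp add: field_simps) (simp add: algebra_simps power2_eq_square power3_eq_cube power4_eq_xxxx eval_nat_numeral)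
  moreover have "0 < (2*T+5)^2 * (2*T+2)^2 * (2*T+4)^2 * (2*T+3)^2" using T by simp
  ultimately show ?thesis by (smt (verit) divide_pos_pos)
qed

lemma dl_2_2_1:
  assumes x: "1 \<le> x"
  shows "Dif f2 (x + 2 - 1) < Dif f1 (x + 1)"
proof -
  define T where "T = real x - 1"
  have T: "0 \<le> T" using x by (simp add: T_def)
  have e0: "f2 (x + 2) = 1/(2*T+4)^2" unfolding f2_def T_def using x by (simp add: algebra_simps of_nat_diff)
  have e1: "f1 (x + 1) = 1/(2*T+3)^2" unfolding f1_def T_def using x by (simp add: algebra_simps of_nat_diff)
  have e2: "f1 (Suc (x + 1)) = 1/(2*T+5)^2" unfolding f1_def T_def using x by (simp add: algebra_simps of_nat_diff)
  have e3: "f2 (x + 2 - 1) = 1/(2*T+2)^2" unfolding f2_def T_def using x by (simp add: algebra_simps of_nat_diff)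
  have s: "Suc (x + 2 - 1) = x + 2" by simp
  show ?thesis using pl_2_2_1[OF T] e0 e1 e2 e3 unfolding Dif_def s by linarith
qed

lemma pl_2_2_2:
  fixes T :: real assumes T: "0 \<le> T"
  shows "1/(2*T+4)^2 + 1/(2*T+4)^2 < 1/(2*T+6)^2 + 1/(2*T+2)^2"
proof -
  have "0 < 5632 + 11776*T + 9088*T^2 + 3072*T^3 + 384*T^4" using T by (intro add_pos_nonneg) auto
  moreover have "(1/(2*T+6)^2 + 1/(2*T+2)^2) - (1/(2*T+4)^2 + 1/(2*T+4)^2) = (5632 + 11776*T + 9088*T^2 + 3072*T^3 + 384*T^4) / ((2*T+6)^2 * (2*T+2)^2 * (2*T+4)^2 * (2*T+4)^2)"
    using T by (simp add: field_simps) (simp add: algebra_simps power2_eq_square power3_eq_cube power4_eq_xxxx eval_nat_numeral)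
  moreover have "0 < (2*T+6)^2 * (2*T+2)^2 * (2*T+4)^2 * (2*T+4)^2" using T by simp
  ultimately show ?thesis by (smt (verit) divide_pos_pos)
qed

lemma dl_2_2_2:
  assumes x: "1 \<le> x"
  shows "Dif f2 (x + 2 - 1) < Dif f2 (x + 2)"
proof -
  define T where "T = real x - 1"
  have T: "0 \<le> T" using x by (simp add: T_def)
  have e0: "f2 (x + 2) = 1/(2*T+4)^2" unfolding f2_def T_def using x by (simp add: algebra_simps of_nat_diff)
  have e1: "f2 (x + 2) = 1/(2*T+4)^2" unfolding f2_def T_def using x by (simp add: algebra_simps of_nat_diff)
  have e2: "f2 (Suc (x + 2)) = 1/(2*T+6)^2" unfolding f2_def T_def using x by (simp add: algebra_simps of_nat_diff)
  have e3: "f2 (x + 2 - 1) = 1/(2*T+2)^2" unfolding f2_def T_def using x by (simp add: algebra_simps of_nat_diff)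
  have s: "Suc (x + 2 - 1) = x + 2" by simp
  show ?thesis using pl_2_2_2[OF T] e0 e1 e2 e3 unfolding Dif_def s by linarith
qed

lemma pl_2_2_3:
  fixes T :: real assumes T: "0 \<le> T"
  shows "1/(2*T+4)^2 + 8/(4*T+5)^2 < 8/(4*T+7)^2 + 1/(2*T+2)^2"
proof -
  have "0 < 2412 + 5064*T + 3456*T^2 + 768*T^3" using T by (intro add_pos_nonneg) auto
  moreover have "(8/(4*T+7)^2 + 1/(2*T+2)^2) - (1/(2*T+4)^2 + 8/(4*T+5)^2) = (2412 + 5064*T + 3456*T^2 + 768*T^3) / ((4*T+7)^2 * (2*T+2)^2 * (2*T+4)^2 * (4*T+5)^2)"
    using T by (simp add: field_simps) (simp add: algebra_simps power2_eq_square power3_eq_cube power4_eq_xxxx eval_nat_numeral)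
  moreover have "0 < (4*T+7)^2 * (2*T+2)^2 * (2*T+4)^2 * (4*T+5)^2" using T by simp
  ultimately show ?thesis by (smt (verit) divide_pos_pos)
qed

lemma dl_2_2_3:
  assumes x: "1 \<le> x"
  shows "Dif f2 (x + 2 - 1) < Dif f3 (2 * x + 1)"
proof -
  define T where "T = real x - 1"
  have T: "0 \<le> T" using x by (simp add: T_def)
  have e0: "f2 (x + 2) = 1/(2*T+4)^2" unfolding f2_def T_def using x by (simp add: algebra_simps of_nat_diff)
  have e1: "f3 (2 * x + 1) = 8/(4*T+5)^2" unfolding f3_def T_def using x by (simp add: algebra_simps of_nat_diff)
  have e2: "f3 (Suc (2 * x + 1)) = 8/(4*T+7)^2" unfolding f3_def T_def using x by (simp add: algebra_simps of_nat_diff)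
  have e3: "f2 (x + 2 - 1) = 1/(2*T+2)^2" unfolding f2_def T_def using x by (simp add: algebra_simps of_nat_diff)
  have s: "Suc (x + 2 - 1) = x + 2" by simp
  show ?thesis using pl_2_2_3[OF T] e0 e1 e2 e3 unfolding Dif_def s by linarith
qed

lemma pl_2_3_1:
  fixes T :: real assumes T: "0 \<le> T"
  shows "8/(4*T+5)^2 + 1/(2*T+3)^2 < 1/(2*T+5)^2 + 8/(4*T+3)^2"
proof -
  have "0 < 25200 + 73080*T + 77824*T^2 + 36096*T^3 + 6144*T^4" using T by (intro add_pos_nonneg) auto
  moreover have "(1/(2*T+5)^2 + 8/(4*T+3)^2) - (8/(4*T+5)^2 + 1/(2*T+3)^2) = (25200 + 73080*T + 77824*T^2 + 36096*T^3 + 6144*T^4) / ((2*T+5)^2 * (4*T+3)^2 * (4*T+5)^2 * (2*T+3)^2)"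
    using T by (simp add: field_simps) (simp add: algebra_simps power2_eq_square power3_eq_cube power4_eq_xxxx eval_nat_numeral)
  moreover have "0 < (2*T+5)^2 * (4*T+3)^2 * (4*T+5)^2 * (2*T+3)^2" using T by simp
  ultimately show ?thesis by (smt (verit) divide_pos_pos)
qed

lemma dl_2_3_1:
  assumes x: "1 \<le> x"
  shows "Dif f3 (2 * x + 1 - 1) < Dif f1 (x + 1)"
proof -
  define T where "T = real x - 1"
  have T: "0 \<le> T" using x by (simp add: T_def)
  have e0: "f3 (2 * x + 1) = 8/(4*T+5)^2" unfolding f3_def T_def using x by (simp add: algebra_simps of_nat_diff)
  have e1: "f1 (x + 1) = 1/(2*T+3)^2" unfolding f1_def T_def using x by (simp add: algebra_simps of_nat_diff)
  have e2: "f1 (Suc (x + 1)) = 1/(2*T+5)^2" unfolding f1_def T_def using x by (simp add: algebra_simps of_nat_diff)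
  have e3: "f3 (2 * x + 1 - 1) = 8/(4*T+3)^2" unfolding f3_def T_def using x by (simp add: algebra_simps of_nat_diff)
  have s: "Suc (2 * x + 1 - 1) = 2 * x + 1" by simp
  show ?thesis using pl_2_3_1[OF T] e0 e1 e2 e3 unfolding Dif_def s by linarith
qed

lemma pl_2_3_2:
  fixes T :: real assumes T: "0 \<le> T"
  shows "8/(4*T+5)^2 + 1/(2*T+4)^2 < 1/(2*T+6)^2 + 8/(4*T+3)^2"
proof -
  have "0 < 69228 + 175608*T + 160896*T^2 + 63744*T^3 + 9216*T^4" using T by (intro add_pos_nonneg) auto
  moreover have "(1/(2*T+6)^2 + 8/(4*T+3)^2) - (8/(4*T+5)^2 + 1/(2*T+4)^2) = (69228 + 175608*T + 160896*T^2 + 63744*T^3 + 9216*T^4) / ((2*T+6)^2 * (4*T+3)^2 * (4*T+5)^2 * (2*T+4)^2)"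
    using T by (simp add: field_simps) (simp add: algebra_simps power2_eq_square power3_eq_cube power4_eq_xxxx eval_nat_numeral)
  moreover have "0 < (2*T+6)^2 * (4*T+3)^2 * (4*T+5)^2 * (2*T+4)^2" using T by simp
  ultimately show ?thesis by (smt (verit) divide_pos_pos)
qed

lemma dl_2_3_2:
  assumes x: "1 \<le> x"
  shows "Dif f3 (2 * x + 1 - 1) < Dif f2 (x + 2)"
proof -
  define T where "T = real x - 1"
  have T: "0 \<le> T" using x by (simp add: T_def)
  have e0: "f3 (2 * x + 1) = 8/(4*T+5)^2" unfolding f3_def T_def using x by (simp add: algebra_simps of_nat_diff)
  have e1: "f2 (x + 2) = 1/(2*T+4)^2" unfolding f2_def T_def using x by (simp add: algebra_simps of_nat_diff)
  have e2: "f2 (Suc (x + 2)) = 1/(2*T+6)^2" unfolding f2_def T_def using x by (simp add: algebra_simps of_nat_diff)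
  have e3: "f3 (2 * x + 1 - 1) = 8/(4*T+3)^2" unfolding f3_def T_def using x by (simp add: algebra_simps of_nat_diff)
  have s: "Suc (2 * x + 1 - 1) = 2 * x + 1" by simp
  show ?thesis using pl_2_3_2[OF T] e0 e1 e2 e3 unfolding Dif_def s by linarith
qed

lemma pl_2_3_3:
  fixes T :: real assumes T: "0 \<le> T"
  shows "8/(4*T+5)^2 + 8/(4*T+5)^2 < 8/(4*T+7)^2 + 8/(4*T+3)^2"
proof -
  have "0 < 113600 + 373760*T + 456704*T^2 + 245760*T^3 + 49152*T^4" using T by (intro add_pos_nonneg) auto
  moreover have "(8/(4*T+7)^2 + 8/(4*T+3)^2) - (8/(4*T+5)^2 + 8/(4*T+5)^2) = (113600 + 373760*T + 456704*T^2 + 245760*T^3 + 49152*T^4) / ((4*T+7)^2 * (4*T+3)^2 * (4*T+5)^2 * (4*T+5)^2)"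
    using T by (simp add: field_simps) (simp add: algebra_simps power2_eq_square power3_eq_cube power4_eq_xxxx eval_nat_numeral)
  moreover have "0 < (4*T+7)^2 * (4*T+3)^2 * (4*T+5)^2 * (4*T+5)^2" using T by simp
  ultimately show ?thesis by (smt (verit) divide_pos_pos)
qed

lemma dl_2_3_3:
  assumes x: "1 \<le> x"
  shows "Dif f3 (2 * x + 1 - 1) < Dif f3 (2 * x + 1)"
proof -
  define T where "T = real x - 1"
  have T: "0 \<le> T" using x by (simp add: T_def)
  have e0: "f3 (2 * x + 1) = 8/(4*T+5)^2" unfolding f3_def T_def using x by (simp add: algebra_simps of_nat_diff)
  have e1: "f3 (2 * x + 1) = 8/(4*T+5)^2" unfolding f3_def T_def using x by (simp add: algebra_simps of_nat_diff)
  have e2: "f3 (Suc (2 * x + 1)) = 8/(4*T+7)^2" unfolding f3_def T_def using x by (simp add: algebra_simps of_nat_diff)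
  have e3: "f3 (2 * x + 1 - 1) = 8/(4*T+3)^2" unfolding f3_def T_def using x by (simp add: algebra_simps of_nat_diff)
  have s: "Suc (2 * x + 1 - 1) = 2 * x + 1" by simp
  show ?thesis using pl_2_3_3[OF T] e0 e1 e2 e3 unfolding Dif_def s by linarith
qed

lemma pl_3_1_1:
  fixes T :: real assumes T: "0 \<le> T"
  shows "1/(2*T+3)^2 + 1/(2*T+3)^2 < 1/(2*T+5)^2 + 1/(2*T+1)^2"
proof -
  have "0 < 1656 + 4800*T + 5056*T^2 + 2304*T^3 + 384*T^4" using T by (intro add_pos_nonneg) auto
  moreover have "(1/(2*T+5)^2 + 1/(2*T+1)^2) - (1/(2*T+3)^2 + 1/(2*T+3)^2) = (1656 + 4800*T + 5056*T^2 + 2304*T^3 + 384*T^4) / ((2*T+5)^2 * (2*T+1)^2 * (2*T+3)^2 * (2*T+3)^2)"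
    using T by (simp add: field_simps) (simp add: algebra_simps power2_eq_square power3_eq_cube power4_eq_xxxx eval_nat_numeral)
  moreover have "0 < (2*T+5)^2 * (2*T+1)^2 * (2*T+3)^2 * (2*T+3)^2" using T by simp
  ultimately show ?thesis by (smt (verit) divide_pos_pos)
qed

lemma dl_3_1_1:
  assumes x: "1 \<le> x"
  shows "Dif f1 (x + 1 - 1) < Dif f1 (x + 1)"
proof -
  define T where "T = real x - 1"
  have T: "0 \<le> T" using x by (simp add: T_def)
  have e0: "f1 (x + 1) = 1/(2*T+3)^2" unfolding f1_def T_def using x by (simp add: algebra_simps of_nat_diff)
  have e1: "f1 (x + 1) = 1/(2*T+3)^2" unfolding f1_def T_def using x by (simp add: algebra_simps of_nat_diff)
  have e2: "f1 (Suc (x + 1)) = 1/(2*T+5)^2" unfolding f1_def T_def using x by (simp add: algebra_simps of_nat_diff)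
  have e3: "f1 (x + 1 - 1) = 1/(2*T+1)^2" unfolding f1_def T_def using x by (simp add: algebra_simps of_nat_diff)
  have s: "Suc (x + 1 - 1) = x + 1" by simp
  show ?thesis using pl_3_1_1[OF T] e0 e1 e2 e3 unfolding Dif_def s by linarith
qed

lemma pl_3_1_2:
  fixes T :: real assumes T: "0 \<le> T"
  shows "1/(2*T+3)^2 + 1/(2*T+4)^2 < 1/(2*T+6)^2 + 1/(2*T+1)^2"
proof -
  have "0 < 4428 + 11256*T + 10272*T^2 + 4032*T^3 + 576*T^4" using T by (intro add_pos_nonneg) auto
  moreover have "(1/(2*T+6)^2 + 1/(2*T+1)^2) - (1/(2*T+3)^2 + 1/(2*T+4)^2) = (4428 + 11256*T + 10272*T^2 + 4032*T^3 + 576*T^4) / ((2*T+6)^2 * (2*T+1)^2 * (2*T+3)^2 * (2*T+4)^2)"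
    using T by (simp add: field_simps) (simp add: algebra_simps power2_eq_square power3_eq_cube power4_eq_xxxx eval_nat_numeral)
  moreover have "0 < (2*T+6)^2 * (2*T+1)^2 * (2*T+3)^2 * (2*T+4)^2" using T by simp
  ultimately show ?thesis by (smt (verit) divide_pos_pos)
qed

lemma dl_3_1_2:
  assumes x: "1 \<le> x"
  shows "Dif f1 (x + 1 - 1) < Dif f2 (x + 2)"
proof -
  define T where "T = real x - 1"
  have T: "0 \<le> T" using x by (simp add: T_def)
  have e0: "f1 (x + 1) = 1/(2*T+3)^2" unfolding f1_def T_def using x by (simp add: algebra_simps of_nat_diff)
  have e1: "f2 (x + 2) = 1/(2*T+4)^2" unfolding f2_def T_def using x by (simp add: algebra_simps of_nat_diff)
  have e2: "f2 (Suc (x + 2)) = 1/(2*T+6)^2" unfolding f2_def T_def using x by (simp add: algebra_simps of_nat_diff)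
  have e3: "f1 (x + 1 - 1) = 1/(2*T+1)^2" unfolding f1_def T_def using x by (simp add: algebra_simps of_nat_diff)
  have s: "Suc (x + 1 - 1) = x + 1" by simp
  show ?thesis using pl_3_1_2[OF T] e0 e1 e2 e3 unfolding Dif_def s by linarith
qed

lemma pl_3_1_3:
  fixes T :: real assumes T: "0 \<le> T"
  shows "1/(2*T+3)^2 + 8/(4*T+7)^2 < 8/(4*T+9)^2 + 1/(2*T+1)^2"
proof -
  have "0 < 29448 + 82824*T + 84736*T^2 + 37632*T^3 + 6144*T^4" using T by (intro add_pos_nonneg) auto
  moreover have "(8/(4*T+9)^2 + 1/(2*T+1)^2) - (1/(2*T+3)^2 + 8/(4*T+7)^2) = (29448 + 82824*T + 84736*T^2 + 37632*T^3 + 6144*T^4) / ((4*T+9)^2 * (2*T+1)^2 * (2*T+3)^2 * (4*T+7)^2)"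
    using T by (simp add: field_simps) (simp add: algebra_simps power2_eq_square power3_eq_cube power4_eq_xxxx eval_nat_numeral)
  moreover have "0 < (4*T+9)^2 * (2*T+1)^2 * (2*T+3)^2 * (4*T+7)^2" using T by simp
  ultimately show ?thesis by (smt (verit) divide_pos_pos)
qed

lemma dl_3_1_3:
  assumes x: "1 \<le> x"
  shows "Dif f1 (x + 1 - 1) < Dif f3 (2 * x + 2)"
proof -
  define T where "T = real x - 1"
  have T: "0 \<le> T" using x by (simp add: T_def)
  have e0: "f1 (x + 1) = 1/(2*T+3)^2" unfolding f1_def T_def using x by (simp add: algebra_simps of_nat_diff)
  have e1: "f3 (2 * x + 2) = 8/(4*T+7)^2" unfolding f3_def T_def using x by (simp add: algebra_simps of_nat_diff)
  have e2: "f3 (Suc (2 * x + 2)) = 8/(4*T+9)^2" unfolding f3_def T_def using x by (simp add: algebra_simps of_nat_diff)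
  have e3: "f1 (x + 1 - 1) = 1/(2*T+1)^2" unfolding f1_def T_def using x by (simp add: algebra_simps of_nat_diff)
  have s: "Suc (x + 1 - 1) = x + 1" by simp
  show ?thesis using pl_3_1_3[OF T] e0 e1 e2 e3 unfolding Dif_def s by linarith
qed

lemma pl_3_2_1:
  fixes T :: real assumes T: "0 \<le> T"
  shows "1/(2*T+4)^2 + 1/(2*T+3)^2 < 1/(2*T+5)^2 + 1/(2*T+2)^2"
proof -
  have "0 < 1676 + 3976*T + 3488*T^2 + 1344*T^3 + 192*T^4" using T by (intro add_pos_nonneg) auto
  moreover have "(1/(2*T+5)^2 + 1/(2*T+2)^2) - (1/(2*T+4)^2 + 1/(2*T+3)^2) = (1676 + 3976*T + 3488*T^2 + 1344*T^3 + 192*T^4) / ((2*T+5)^2 * (2*T+2)^2 * (2*T+4)^2 * (2*T+3)^2)"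
    using T by (simp add: field_simps) (simp add: algebra_simps power2_eq_square power3_eq_cube power4_eq_xxxx eval_nat_numeral)
  moreover have "0 < (2*T+5)^2 * (2*T+2)^2 * (2*T+4)^2 * (2*T+3)^2" using T by simp
  ultimately show ?thesis by (smt (verit) divide_pos_pos)
qed

lemma dl_3_2_1:
  assumes x: "1 \<le> x"
  shows "Dif f2 (x + 2 - 1) < Dif f1 (x + 1)"
proof -
  define T where "T = real x - 1"
  have T: "0 \<le> T" using x by (simp add: T_def)
  have e0: "f2 (x + 2) = 1/(2*T+4)^2" unfolding f2_def T_def using x by (simp add: algebra_simps of_nat_diff)
  have e1: "f1 (x + 1) = 1/(2*T+3)^2" unfolding f1_def T_def using x by (simp add: algebra_simps of_nat_diff)
  have e2: "f1 (Suc (x + 1)) = 1/(2*T+5)^2" unfolding f1_def T_def using x by (simp add: algebra_simps of_nat_diff)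
  have e3: "f2 (x + 2 - 1) = 1/(2*T+2)^2" unfolding f2_def T_def using x by (simp add: algebra_simps of_nat_diff)
  have s: "Suc (x + 2 - 1) = x + 2" by simp
  show ?thesis using pl_3_2_1[OF T] e0 e1 e2 e3 unfolding Dif_def s by linarith
qed

lemma pl_3_2_2:
  fixes T :: real assumes T: "0 \<le> T"
  shows "1/(2*T+4)^2 + 1/(2*T+4)^2 < 1/(2*T+6)^2 + 1/(2*T+2)^2"
proof -
  have "0 < 5632 + 11776*T + 9088*T^2 + 3072*T^3 + 384*T^4" using T by (intro add_pos_nonneg) auto
  moreover have "(1/(2*T+6)^2 + 1/(2*T+2)^2) - (1/(2*T+4)^2 + 1/(2*T+4)^2) = (5632 + 11776*T + 9088*T^2 + 3072*T^3 + 384*T^4) / ((2*T+6)^2 * (2*T+2)^2 * (2*T+4)^2 * (2*T+4)^2)"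
    using T by (simp add: field_simps) (simp add: algebra_simps power2_eq_square power3_eq_cube power4_eq_xxxx eval_nat_numeral)
  moreover have "0 < (2*T+6)^2 * (2*T+2)^2 * (2*T+4)^2 * (2*T+4)^2" using T by simp
  ultimately show ?thesis by (smt (verit) divide_pos_pos)
qed

lemma dl_3_2_2:
  assumes x: "1 \<le> x"
  shows "Dif f2 (x + 2 - 1) < Dif f2 (x + 2)"
proof -
  define T where "T = real x - 1"
  have T: "0 \<le> T" using x by (simp add: T_def)
  have e0: "f2 (x + 2) = 1/(2*T+4)^2" unfolding f2_def T_def using x by (simp add: algebra_simps of_nat_diff)
  have e1: "f2 (x + 2) = 1/(2*T+4)^2" unfolding f2_def T_def using x by (simp add: algebra_simps of_nat_diff)
  have e2: "f2 (Suc (x + 2)) = 1/(2*T+6)^2" unfolding f2_def T_def using x by (simp add: algebra_simps of_nat_diff)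
  have e3: "f2 (x + 2 - 1) = 1/(2*T+2)^2" unfolding f2_def T_def using x by (simp add: algebra_simps of_nat_diff)
  have s: "Suc (x + 2 - 1) = x + 2" by simp
  show ?thesis using pl_3_2_2[OF T] e0 e1 e2 e3 unfolding Dif_def s by linarith
qed

lemma pl_3_2_3:
  fixes T :: real assumes T: "0 \<le> T"
  shows "1/(2*T+4)^2 + 8/(4*T+7)^2 < 8/(4*T+9)^2 + 1/(2*T+2)^2"
proof -
  have "0 < 31244 + 71176*T + 60032*T^2 + 22272*T^3 + 3072*T^4" using T by (intro add_pos_nonneg) auto
  moreover have "(8/(4*T+9)^2 + 1/(2*T+2)^2) - (1/(2*T+4)^2 + 8/(4*T+7)^2) = (31244 + 71176*T + 60032*T^2 + 22272*T^3 + 3072*T^4) / ((4*T+9)^2 * (2*T+2)^2 * (2*T+4)^2 * (4*T+7)^2)"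
    using T by (simp add: field_simps) (simp add: algebra_simps power2_eq_square power3_eq_cube power4_eq_xxxx eval_nat_numeral)
  moreover have "0 < (4*T+9)^2 * (2*T+2)^2 * (2*T+4)^2 * (4*T+7)^2" using T by simp
  ultimately show ?thesis by (smt (verit) divide_pos_pos)
qed

lemma dl_3_2_3:
  assumes x: "1 \<le> x"
  shows "Dif f2 (x + 2 - 1) < Dif f3 (2 * x + 2)"
proof -
  define T where "T = real x - 1"
  have T: "0 \<le> T" using x by (simp add: T_def)
  have e0: "f2 (x + 2) = 1/(2*T+4)^2" unfolding f2_def T_def using x by (simp add: algebra_simps of_nat_diff)
  have e1: "f3 (2 * x + 2) = 8/(4*T+7)^2" unfolding f3_def T_def using x by (simp add: algebra_simps of_nat_diff)
  have e2: "f3 (Suc (2 * x + 2)) = 8/(4*T+9)^2" unfolding f3_def T_def using x by (simp add: algebra_simps of_nat_diff)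
  have e3: "f2 (x + 2 - 1) = 1/(2*T+2)^2" unfolding f2_def T_def using x by (simp add: algebra_simps of_nat_diff)
  have s: "Suc (x + 2 - 1) = x + 2" by simp
  show ?thesis using pl_3_2_3[OF T] e0 e1 e2 e3 unfolding Dif_def s by linarith
qed

lemma pl_3_3_1:
  fixes T :: real assumes T: "0 \<le> T"
  shows "8/(4*T+7)^2 + 1/(2*T+3)^2 < 1/(2*T+5)^2 + 8/(4*T+5)^2"
proof -
  have "0 < 23600 + 57400*T + 51968*T^2 + 20736*T^3 + 3072*T^4" using T by (intro add_pos_nonneg) auto
  moreover have "(1/(2*T+5)^2 + 8/(4*T+5)^2) - (8/(4*T+7)^2 + 1/(2*T+3)^2) = (23600 + 57400*T + 51968*T^2 + 20736*T^3 + 3072*T^4) / ((2*T+5)^2 * (4*T+5)^2 * (4*T+7)^2 * (2*T+3)^2)"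
    using T by (simp add: field_simps) (simp add: algebra_simps power2_eq_square power3_eq_cube power4_eq_xxxx eval_nat_numeral)
  moreover have "0 < (2*T+5)^2 * (4*T+5)^2 * (4*T+7)^2 * (2*T+3)^2" using T by simp
  ultimately show ?thesis by (smt (verit) divide_pos_pos)
qed

lemma dl_3_3_1:
  assumes x: "1 \<le> x"
  shows "Dif f3 (2 * x + 2 - 1) < Dif f1 (x + 1)"
proof -
  define T where "T = real x - 1"
  have T: "0 \<le> T" using x by (simp add: T_def)
  have e0: "f3 (2 * x + 2) = 8/(4*T+7)^2" unfolding f3_def T_def using x by (simp add: algebra_simps of_nat_diff)
  have e1: "f1 (x + 1) = 1/(2*T+3)^2" unfolding f1_def T_def using x by (simp add: algebra_simps of_nat_diff)
  have e2: "f1 (Suc (x + 1)) = 1/(2*T+5)^2" unfolding f1_def T_def using x by (simp add: algebra_simps of_nat_diff)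
  have e3: "f3 (2 * x + 2 - 1) = 8/(4*T+5)^2" unfolding f3_def T_def using x by (simp add: algebra_simps of_nat_diff)
  have s: "Suc (2 * x + 2 - 1) = 2 * x + 2" by simp
  show ?thesis using pl_3_3_1[OF T] e0 e1 e2 e3 unfolding Dif_def s by linarith
qed

lemma pl_3_3_2:
  fixes T :: real assumes T: "0 \<le> T"
  shows "8/(4*T+7)^2 + 1/(2*T+4)^2 < 1/(2*T+6)^2 + 8/(4*T+5)^2"
proof -
  have "0 < 86092 + 181048*T + 141184*T^2 + 48384*T^3 + 6144*T^4" using T by (intro add_pos_nonneg) auto
  moreover have "(1/(2*T+6)^2 + 8/(4*T+5)^2) - (8/(4*T+7)^2 + 1/(2*T+4)^2) = (86092 + 181048*T + 141184*T^2 + 48384*T^3 + 6144*T^4) / ((2*T+6)^2 * (4*T+5)^2 * (4*T+7)^2 * (2*T+4)^2)"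
    using T by (simp add: field_simps) (simp add: algebra_simps power2_eq_square power3_eq_cube power4_eq_xxxx eval_nat_numeral)
  moreover have "0 < (2*T+6)^2 * (4*T+5)^2 * (4*T+7)^2 * (2*T+4)^2" using T by simp
  ultimately show ?thesis by (smt (verit) divide_pos_pos)
qed

lemma dl_3_3_2:
  assumes x: "1 \<le> x"
  shows "Dif f3 (2 * x + 2 - 1) < Dif f2 (x + 2)"
proof -
  define T where "T = real x - 1"
  have T: "0 \<le> T" using x by (simp add: T_def)
  have e0: "f3 (2 * x + 2) = 8/(4*T+7)^2" unfolding f3_def T_def using x by (simp add: algebra_simps of_nat_diff)
  have e1: "f2 (x + 2) = 1/(2*T+4)^2" unfolding f2_def T_def using x by (simp add: algebra_simps of_nat_diff)
  have e2: "f2 (Suc (x + 2)) = 1/(2*T+6)^2" unfolding f2_def T_def using x by (simp add: algebra_simps of_nat_diff)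
  have e3: "f3 (2 * x + 2 - 1) = 8/(4*T+5)^2" unfolding f3_def T_def using x by (simp add: algebra_simps of_nat_diff)
  have s: "Suc (2 * x + 2 - 1) = 2 * x + 2" by simp
  show ?thesis using pl_3_3_2[OF T] e0 e1 e2 e3 unfolding Dif_def s by linarith
qed

lemma pl_3_3_3:
  fixes T :: real assumes T: "0 \<le> T"
  shows "8/(4*T+7)^2 + 8/(4*T+7)^2 < 8/(4*T+9)^2 + 8/(4*T+5)^2"
proof -
  have "0 < 448448 + 1039360*T + 899072*T^2 + 344064*T^3 + 49152*T^4" using T by (intro add_pos_nonneg) auto
  moreover have "(8/(4*T+9)^2 + 8/(4*T+5)^2) - (8/(4*T+7)^2 + 8/(4*T+7)^2) = (448448 + 1039360*T + 899072*T^2 + 344064*T^3 + 49152*T^4) / ((4*T+9)^2 * (4*T+5)^2 * (4*T+7)^2 * (4*T+7)^2)"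
    using T by (simp add: field_simps) (simp add: algebra_simps power2_eq_square power3_eq_cube power4_eq_xxxx eval_nat_numeral)
  moreover have "0 < (4*T+9)^2 * (4*T+5)^2 * (4*T+7)^2 * (4*T+7)^2" using T by simp
  ultimately show ?thesis by (smt (verit) divide_pos_pos)
qed

lemma dl_3_3_3:
  assumes x: "1 \<le> x"
  shows "Dif f3 (2 * x + 2 - 1) < Dif f3 (2 * x + 2)"
proof -
  define T where "T = real x - 1"
  have T: "0 \<le> T" using x by (simp add: T_def)
  have e0: "f3 (2 * x + 2) = 8/(4*T+7)^2" unfolding f3_def T_def using x by (simp add: algebra_simps of_nat_diff)
  have e1: "f3 (2 * x + 2) = 8/(4*T+7)^2" unfolding f3_def T_def using x by (simp add: algebra_simps of_nat_diff)
  have e2: "f3 (Suc (2 * x + 2)) = 8/(4*T+9)^2" unfolding f3_def T_def using x by (simp add: algebra_simps of_nat_diff)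
  have e3: "f3 (2 * x + 2 - 1) = 8/(4*T+5)^2" unfolding f3_def T_def using x by (simp add: algebra_simps of_nat_diff)
  have s: "Suc (2 * x + 2 - 1) = 2 * x + 2" by simp
  show ?thesis using pl_3_3_3[OF T] e0 e1 e2 e3 unfolding Dif_def s by linarith
qed

lemma pl_4_1_1:
  fixes T :: real assumes T: "0 \<le> T"
  shows "1/(2*T+5)^2 + 1/(2*T+5)^2 < 1/(2*T+7)^2 + 1/(2*T+3)^2"
proof -
  have "0 < 14200 + 23360*T + 14272*T^2 + 3840*T^3 + 384*T^4" using T by (intro add_pos_nonneg) auto
  moreover have "(1/(2*T+7)^2 + 1/(2*T+3)^2) - (1/(2*T+5)^2 + 1/(2*T+5)^2) = (14200 + 23360*T + 14272*T^2 + 3840*T^3 + 384*T^4) / ((2*T+7)^2 * (2*T+3)^2 * (2*T+5)^2 * (2*T+5)^2)"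
    using T by (simp add: field_simps) (simp add: algebra_simps power2_eq_square power3_eq_cube power4_eq_xxxx eval_nat_numeral)
  moreover have "0 < (2*T+7)^2 * (2*T+3)^2 * (2*T+5)^2 * (2*T+5)^2" using T by simp
  ultimately show ?thesis by (smt (verit) divide_pos_pos)
qed

lemma dl_4_1_1:
  assumes x: "1 \<le> x"
  shows "Dif f1 (x + 2 - 1) < Dif f1 (x + 2)"
proof -
  define T where "T = real x - 1"
  have T: "0 \<le> T" using x by (simp add: T_def)
  have e0: "f1 (x + 2) = 1/(2*T+5)^2" unfolding f1_def T_def using x by (simp add: algebra_simps of_nat_diff)
  have e1: "f1 (x + 2) = 1/(2*T+5)^2" unfolding f1_def T_def using x by (simp add: algebra_simps of_nat_diff)
  have e2: "f1 (Suc (x + 2)) = 1/(2*T+7)^2" unfolding f1_def T_def using x by (simp add: algebra_simps of_nat_diff)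
  have e3: "f1 (x + 2 - 1) = 1/(2*T+3)^2" unfolding f1_def T_def using x by (simp add: algebra_simps of_nat_diff)
  have s: "Suc (x + 2 - 1) = x + 2" by simp
  show ?thesis using pl_4_1_1[OF T] e0 e1 e2 e3 unfolding Dif_def s by linarith
qed

lemma pl_4_1_2:
  fixes T :: real assumes T: "0 \<le> T"
  shows "1/(2*T+5)^2 + 1/(2*T+4)^2 < 1/(2*T+6)^2 + 1/(2*T+3)^2"
proof -
  have "0 < 4716 + 8568*T + 5792*T^2 + 1728*T^3 + 192*T^4" using T by (intro add_pos_nonneg) auto
  moreover have "(1/(2*T+6)^2 + 1/(2*T+3)^2) - (1/(2*T+5)^2 + 1/(2*T+4)^2) = (4716 + 8568*T + 5792*T^2 + 1728*T^3 + 192*T^4) / ((2*T+6)^2 * (2*T+3)^2 * (2*T+5)^2 * (2*T+4)^2)"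
    using T by (simp add: field_simps) (simp add: algebra_simps power2_eq_square power3_eq_cube power4_eq_xxxx eval_nat_numeral)
  moreover have "0 < (2*T+6)^2 * (2*T+3)^2 * (2*T+5)^2 * (2*T+4)^2" using T by simp
  ultimately show ?thesis by (smt (verit) divide_pos_pos)
qed

lemma dl_4_1_2:
  assumes x: "1 \<le> x"
  shows "Dif f1 (x + 2 - 1) < Dif f2 (x + 2)"
proof -
  define T where "T = real x - 1"
  have T: "0 \<le> T" using x by (simp add: T_def)
  have e0: "f1 (x + 2) = 1/(2*T+5)^2" unfolding f1_def T_def using x by (simp add: algebra_simps of_nat_diff)
  have e1: "f2 (x + 2) = 1/(2*T+4)^2" unfolding f2_def T_def using x by (simp add: algebra_simps of_nat_diff)
  have e2: "f2 (Suc (x + 2)) = 1/(2*T+6)^2" unfolding f2_def T_def using x by (simp add: algebra_simps of_nat_diff)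
  have e3: "f1 (x + 2 - 1) = 1/(2*T+3)^2" unfolding f1_def T_def using x by (simp add: algebra_simps of_nat_diff)
  have s: "Suc (x + 2 - 1) = x + 2" by simp
  show ?thesis using pl_4_1_2[OF T] e0 e1 e2 e3 unfolding Dif_def s by linarith
qed

lemma pl_4_1_3:
  fixes T :: real assumes T: "0 \<le> T"
  shows "1/(2*T+5)^2 + 8/(4*T+7)^2 < 8/(4*T+9)^2 + 1/(2*T+3)^2"
proof -
  have "0 < 5904 + 9096*T + 4608*T^2 + 768*T^3" using T by (intro add_pos_nonneg) auto
  moreover have "(8/(4*T+9)^2 + 1/(2*T+3)^2) - (1/(2*T+5)^2 + 8/(4*T+7)^2) = (5904 + 9096*T + 4608*T^2 + 768*T^3) / ((4*T+9)^2 * (2*T+3)^2 * (2*T+5)^2 * (4*T+7)^2)"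
    using T by (simp add: field_simps) (simp add: algebra_simps power2_eq_square power3_eq_cube power4_eq_xxxx eval_nat_numeral)
  moreover have "0 < (4*T+9)^2 * (2*T+3)^2 * (2*T+5)^2 * (4*T+7)^2" using T by simp
  ultimately show ?thesis by (smt (verit) divide_pos_pos)
qed

lemma dl_4_1_3:
  assumes x: "1 \<le> x"
  shows "Dif f1 (x + 2 - 1) < Dif f3 (2 * x + 2)"
proof -
  define T where "T = real x - 1"
  have T: "0 \<le> T" using x by (simp add: T_def)
  have e0: "f1 (x + 2) = 1/(2*T+5)^2" unfolding f1_def T_def using x by (simp add: algebra_simps of_nat_diff)
  have e1: "f3 (2 * x + 2) = 8/(4*T+7)^2" unfolding f3_def T_def using x by (simp add: algebra_simps of_nat_diff)
  have e2: "f3 (Suc (2 * x + 2)) = 8/(4*T+9)^2" unfolding f3_def T_def using x by (simp add: algebra_simps of_nat_diff)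
  have e3: "f1 (x + 2 - 1) = 1/(2*T+3)^2" unfolding f1_def T_def using x by (simp add: algebra_simps of_nat_diff)
  have s: "Suc (x + 2 - 1) = x + 2" by simp
  show ?thesis using pl_4_1_3[OF T] e0 e1 e2 e3 unfolding Dif_def s by linarith
qed

lemma pl_4_2_1:
  fixes T :: real assumes T: "0 \<le> T"
  shows "1/(2*T+4)^2 + 1/(2*T+5)^2 < 1/(2*T+7)^2 + 1/(2*T+2)^2"
proof -
  have "0 < 13164 + 24840*T + 17184*T^2 + 5184*T^3 + 576*T^4" using T by (intro add_pos_nonneg) auto
  moreover have "(1/(2*T+7)^2 + 1/(2*T+2)^2) - (1/(2*T+4)^2 + 1/(2*T+5)^2) = (13164 + 24840*T + 17184*T^2 + 5184*T^3 + 576*T^4) / ((2*T+7)^2 * (2*T+2)^2 * (2*T+4)^2 * (2*T+5)^2)"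
    using T by (simp add: field_simps) (simp add: algebra_simps power2_eq_square power3_eq_cube power4_eq_xxxx eval_nat_numeral)
  moreover have "0 < (2*T+7)^2 * (2*T+2)^2 * (2*T+4)^2 * (2*T+5)^2" using T by simp
  ultimately show ?thesis by (smt (verit) divide_pos_pos)
qed

lemma dl_4_2_1:
  assumes x: "1 \<le> x"
  shows "Dif f2 (x + 2 - 1) < Dif f1 (x + 2)"
proof -
  define T where "T = real x - 1"
  have T: "0 \<le> T" using x by (simp add: T_def)
  have e0: "f2 (x + 2) = 1/(2*T+4)^2" unfolding f2_def T_def using x by (simp add: algebra_simps of_nat_diff)
  have e1: "f1 (x + 2) = 1/(2*T+5)^2" unfolding f1_def T_def using x by (simp add: algebra_simps of_nat_diff)
  have e2: "f1 (Suc (x + 2)) = 1/(2*T+7)^2" unfolding f1_def T_def using x by (simp add: algebra_simps of_nat_diff)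
  have e3: "f2 (x + 2 - 1) = 1/(2*T+2)^2" unfolding f2_def T_def using x by (simp add: algebra_simps of_nat_diff)
  have s: "Suc (x + 2 - 1) = x + 2" by simp
  show ?thesis using pl_4_2_1[OF T] e0 e1 e2 e3 unfolding Dif_def s by linarith
qed

lemma pl_4_2_2:
  fixes T :: real assumes T: "0 \<le> T"
  shows "1/(2*T+4)^2 + 1/(2*T+4)^2 < 1/(2*T+6)^2 + 1/(2*T+2)^2"
proof -
  have "0 < 5632 + 11776*T + 9088*T^2 + 3072*T^3 + 384*T^4" using T by (intro add_pos_nonneg) auto
  moreover have "(1/(2*T+6)^2 + 1/(2*T+2)^2) - (1/(2*T+4)^2 + 1/(2*T+4)^2) = (5632 + 11776*T + 9088*T^2 + 3072*T^3 + 384*T^4) / ((2*T+6)^2 * (2*T+2)^2 * (2*T+4)^2 * (2*T+4)^2)"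
    using T by (simp add: field_simps) (simp add: algebra_simps power2_eq_square power3_eq_cube power4_eq_xxxx eval_nat_numeral)
  moreover have "0 < (2*T+6)^2 * (2*T+2)^2 * (2*T+4)^2 * (2*T+4)^2" using T by simp
  ultimately show ?thesis by (smt (verit) divide_pos_pos)
qed

lemma dl_4_2_2:
  assumes x: "1 \<le> x"
  shows "Dif f2 (x + 2 - 1) < Dif f2 (x + 2)"
proof -
  define T where "T = real x - 1"
  have T: "0 \<le> T" using x by (simp add: T_def)
  have e0: "f2 (x + 2) = 1/(2*T+4)^2" unfolding f2_def T_def using x by (simp add: algebra_simps of_nat_diff)
  have e1: "f2 (x + 2) = 1/(2*T+4)^2" unfolding f2_def T_def using x by (simp add: algebra_simps of_nat_diff)
  have e2: "f2 (Suc (x + 2)) = 1/(2*T+6)^2" unfolding f2_def T_def using x by (simp add: algebra_simps of_nat_diff)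
  have e3: "f2 (x + 2 - 1) = 1/(2*T+2)^2" unfolding f2_def T_def using x by (simp add: algebra_simps of_nat_diff)
  have s: "Suc (x + 2 - 1) = x + 2" by simp
  show ?thesis using pl_4_2_2[OF T] e0 e1 e2 e3 unfolding Dif_def s by linarith
qed

lemma pl_4_2_3:
  fixes T :: real assumes T: "0 \<le> T"
  shows "1/(2*T+4)^2 + 8/(4*T+7)^2 < 8/(4*T+9)^2 + 1/(2*T+2)^2"
proof -
  have "0 < 31244 + 71176*T + 60032*T^2 + 22272*T^3 + 3072*T^4" using T by (intro add_pos_nonneg) auto
  moreover have "(8/(4*T+9)^2 + 1/(2*T+2)^2) - (1/(2*T+4)^2 + 8/(4*T+7)^2) = (31244 + 71176*T + 60032*T^2 + 22272*T^3 + 3072*T^4) / ((4*T+9)^2 * (2*T+2)^2 * (2*T+4)^2 * (4*T+7)^2)"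
    using T by (simp add: field_simps) (simp add: algebra_simps power2_eq_square power3_eq_cube power4_eq_xxxx eval_nat_numeral)
  moreover have "0 < (4*T+9)^2 * (2*T+2)^2 * (2*T+4)^2 * (4*T+7)^2" using T by simp
  ultimately show ?thesis by (smt (verit) divide_pos_pos)
qed

lemma dl_4_2_3:
  assumes x: "1 \<le> x"
  shows "Dif f2 (x + 2 - 1) < Dif f3 (2 * x + 2)"
proof -
  define T where "T = real x - 1"
  have T: "0 \<le> T" using x by (simp add: T_def)
  have e0: "f2 (x + 2) = 1/(2*T+4)^2" unfolding f2_def T_def using x by (simp add: algebra_simps of_nat_diff)
  have e1: "f3 (2 * x + 2) = 8/(4*T+7)^2" unfolding f3_def T_def using x by (simp add: algebra_simps of_nat_diff)
  have e2: "f3 (Suc (2 * x + 2)) = 8/(4*T+9)^2" unfolding f3_def T_def using x by (simp add: algebra_simps of_nat_diff)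
  have e3: "f2 (x + 2 - 1) = 1/(2*T+2)^2" unfolding f2_def T_def using x by (simp add: algebra_simps of_nat_diff)
  have s: "Suc (x + 2 - 1) = x + 2" by simp
  show ?thesis using pl_4_2_3[OF T] e0 e1 e2 e3 unfolding Dif_def s by linarith
qed

lemma pl_4_3_1:
  fixes T :: real assumes T: "0 \<le> T"
  shows "8/(4*T+7)^2 + 1/(2*T+5)^2 < 1/(2*T+7)^2 + 8/(4*T+5)^2"
proof -
  have "0 < 205800 + 388920*T + 270336*T^2 + 82176*T^3 + 9216*T^4" using T by (intro add_pos_nonneg) auto
  moreover have "(1/(2*T+7)^2 + 8/(4*T+5)^2) - (8/(4*T+7)^2 + 1/(2*T+5)^2) = (205800 + 388920*T + 270336*T^2 + 82176*T^3 + 9216*T^4) / ((2*T+7)^2 * (4*T+5)^2 * (4*T+7)^2 * (2*T+5)^2)"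
    using T by (simp add: field_simps) (simp add: algebra_simps power2_eq_square power3_eq_cube power4_eq_xxxx eval_nat_numeral)
  moreover have "0 < (2*T+7)^2 * (4*T+5)^2 * (4*T+7)^2 * (2*T+5)^2" using T by simp
  ultimately show ?thesis by (smt (verit) divide_pos_pos)
qed

lemma dl_4_3_1:
  assumes x: "1 \<le> x"
  shows "Dif f3 (2 * x + 2 - 1) < Dif f1 (x + 2)"
proof -
  define T where "T = real x - 1"
  have T: "0 \<le> T" using x by (simp add: T_def)
  have e0: "f3 (2 * x + 2) = 8/(4*T+7)^2" unfolding f3_def T_def using x by (simp add: algebra_simps of_nat_diff)
  have e1: "f1 (x + 2) = 1/(2*T+5)^2" unfolding f1_def T_def using x by (simp add: algebra_simps of_nat_diff)
  have e2: "f1 (Suc (x + 2)) = 1/(2*T+7)^2" unfolding f1_def T_def using x by (simp add: algebra_simps of_nat_diff)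
  have e3: "f3 (2 * x + 2 - 1) = 8/(4*T+5)^2" unfolding f3_def T_def using x by (simp add: algebra_simps of_nat_diff)
  have s: "Suc (2 * x + 2 - 1) = 2 * x + 2" by simp
  show ?thesis using pl_4_3_1[OF T] e0 e1 e2 e3 unfolding Dif_def s by linarith
qed

lemma pl_4_3_2:
  fixes T :: real assumes T: "0 \<le> T"
  shows "8/(4*T+7)^2 + 1/(2*T+4)^2 < 1/(2*T+6)^2 + 8/(4*T+5)^2"
proof -
  have "0 < 86092 + 181048*T + 141184*T^2 + 48384*T^3 + 6144*T^4" using T by (intro add_pos_nonneg) auto
  moreover have "(1/(2*T+6)^2 + 8/(4*T+5)^2) - (8/(4*T+7)^2 + 1/(2*T+4)^2) = (86092 + 181048*T + 141184*T^2 + 48384*T^3 + 6144*T^4) / ((2*T+6)^2 * (4*T+5)^2 * (4*T+7)^2 * (2*T+4)^2)"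
    using T by (simp add: field_simps) (simp add: algebra_simps power2_eq_square power3_eq_cube power4_eq_xxxx eval_nat_numeral)
  moreover have "0 < (2*T+6)^2 * (4*T+5)^2 * (4*T+7)^2 * (2*T+4)^2" using T by simp
  ultimately show ?thesis by (smt (verit) divide_pos_pos)
qed

lemma dl_4_3_2:
  assumes x: "1 \<le> x"
  shows "Dif f3 (2 * x + 2 - 1) < Dif f2 (x + 2)"
proof -
  define T where "T = real x - 1"
  have T: "0 \<le> T" using x by (simp add: T_def)
  have e0: "f3 (2 * x + 2) = 8/(4*T+7)^2" unfolding f3_def T_def using x by (simp add: algebra_simps of_nat_diff)
  have e1: "f2 (x + 2) = 1/(2*T+4)^2" unfolding f2_def T_def using x by (simp add: algebra_simps of_nat_diff)
  have e2: "f2 (Suc (x + 2)) = 1/(2*T+6)^2" unfolding f2_def T_def using x by (simp add: algebra_simps of_nat_diff)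
  have e3: "f3 (2 * x + 2 - 1) = 8/(4*T+5)^2" unfolding f3_def T_def using x by (simp add: algebra_simps of_nat_diff)
  have s: "Suc (2 * x + 2 - 1) = 2 * x + 2" by simp
  show ?thesis using pl_4_3_2[OF T] e0 e1 e2 e3 unfolding Dif_def s by linarith
qed

lemma pl_4_3_3:
  fixes T :: real assumes T: "0 \<le> T"
  shows "8/(4*T+7)^2 + 8/(4*T+7)^2 < 8/(4*T+9)^2 + 8/(4*T+5)^2"
proof -
  have "0 < 448448 + 1039360*T + 899072*T^2 + 344064*T^3 + 49152*T^4" using T by (intro add_pos_nonneg) auto
  moreover have "(8/(4*T+9)^2 + 8/(4*T+5)^2) - (8/(4*T+7)^2 + 8/(4*T+7)^2) = (448448 + 1039360*T + 899072*T^2 + 344064*T^3 + 49152*T^4) / ((4*T+9)^2 * (4*T+5)^2 * (4*T+7)^2 * (4*T+7)^2)"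
    using T by (simp add: field_simps) (simp add: algebra_simps power2_eq_square power3_eq_cube power4_eq_xxxx eval_nat_numeral)
  moreover have "0 < (4*T+9)^2 * (4*T+5)^2 * (4*T+7)^2 * (4*T+7)^2" using T by simp
  ultimately show ?thesis by (smt (verit) divide_pos_pos)
qed

lemma dl_4_3_3:
  assumes x: "1 \<le> x"
  shows "Dif f3 (2 * x + 2 - 1) < Dif f3 (2 * x + 2)"
proof -
  define T where "T = real x - 1"
  have T: "0 \<le> T" using x by (simp add: T_def)
  have e0: "f3 (2 * x + 2) = 8/(4*T+7)^2" unfolding f3_def T_def using x by (simp add: algebra_simps of_nat_diff)
  have e1: "f3 (2 * x + 2) = 8/(4*T+7)^2" unfolding f3_def T_def using x by (simp add: algebra_simps of_nat_diff)
  have e2: "f3 (Suc (2 * x + 2)) = 8/(4*T+9)^2" unfolding f3_def T_def using x by (simp add: algebra_simps of_nat_diff)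
  have e3: "f3 (2 * x + 2 - 1) = 8/(4*T+5)^2" unfolding f3_def T_def using x by (simp add: algebra_simps of_nat_diff)
  have s: "Suc (2 * x + 2 - 1) = 2 * x + 2" by simp
  show ?thesis using pl_4_3_3[OF T] e0 e1 e2 e3 unfolding Dif_def s by linarith
qed

lemma pl_5_1_1:
  fixes T :: real assumes T: "0 \<le> T"
  shows "1/(2*T+5)^2 + 1/(2*T+5)^2 < 1/(2*T+7)^2 + 1/(2*T+3)^2"
proof -
  have "0 < 14200 + 23360*T + 14272*T^2 + 3840*T^3 + 384*T^4" using T by (intro add_pos_nonneg) auto
  moreover have "(1/(2*T+7)^2 + 1/(2*T+3)^2) - (1/(2*T+5)^2 + 1/(2*T+5)^2) = (14200 + 23360*T + 14272*T^2 + 3840*T^3 + 384*T^4) / ((2*T+7)^2 * (2*T+3)^2 * (2*T+5)^2 * (2*T+5)^2)"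
    using T by (simp add: field_simps) (simp add: algebra_simps power2_eq_square power3_eq_cube power4_eq_xxxx eval_nat_numeral)
  moreover have "0 < (2*T+7)^2 * (2*T+3)^2 * (2*T+5)^2 * (2*T+5)^2" using T by simp
  ultimately show ?thesis by (smt (verit) divide_pos_pos)
qed

lemma dl_5_1_1:
  assumes x: "1 \<le> x"
  shows "Dif f1 (x + 2 - 1) < Dif f1 (x + 2)"
proof -
  define T where "T = real x - 1"
  have T: "0 \<le> T" using x by (simp add: T_def)
  have e0: "f1 (x + 2) = 1/(2*T+5)^2" unfolding f1_def T_def using x by (simp add: algebra_simps of_nat_diff)
  have e1: "f1 (x + 2) = 1/(2*T+5)^2" unfolding f1_def T_def using x by (simp add: algebra_simps of_nat_diff)
  have e2: "f1 (Suc (x + 2)) = 1/(2*T+7)^2" unfolding f1_def T_def using x by (simp add: algebra_simps of_nat_diff)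
  have e3: "f1 (x + 2 - 1) = 1/(2*T+3)^2" unfolding f1_def T_def using x by (simp add: algebra_simps of_nat_diff)
  have s: "Suc (x + 2 - 1) = x + 2" by simp
  show ?thesis using pl_5_1_1[OF T] e0 e1 e2 e3 unfolding Dif_def s by linarith
qed

lemma pl_5_1_2:
  fixes T :: real assumes T: "0 \<le> T"
  shows "1/(2*T+5)^2 + 1/(2*T+4)^2 < 1/(2*T+6)^2 + 1/(2*T+3)^2"
proof -
  have "0 < 4716 + 8568*T + 5792*T^2 + 1728*T^3 + 192*T^4" using T by (intro add_pos_nonneg) auto
  moreover have "(1/(2*T+6)^2 + 1/(2*T+3)^2) - (1/(2*T+5)^2 + 1/(2*T+4)^2) = (4716 + 8568*T + 5792*T^2 + 1728*T^3 + 192*T^4) / ((2*T+6)^2 * (2*T+3)^2 * (2*T+5)^2 * (2*T+4)^2)"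
    using T by (simp add: field_simps) (simp add: algebra_simps power2_eq_square power3_eq_cube power4_eq_xxxx eval_nat_numeral)
  moreover have "0 < (2*T+6)^2 * (2*T+3)^2 * (2*T+5)^2 * (2*T+4)^2" using T by simp
  ultimately show ?thesis by (smt (verit) divide_pos_pos)
qed

lemma dl_5_1_2:
  assumes x: "1 \<le> x"
  shows "Dif f1 (x + 2 - 1) < Dif f2 (x + 2)"
proof -
  define T where "T = real x - 1"
  have T: "0 \<le> T" using x by (simp add: T_def)
  have e0: "f1 (x + 2) = 1/(2*T+5)^2" unfolding f1_def T_def using x by (simp add: algebra_simps of_nat_diff)
  have e1: "f2 (x + 2) = 1/(2*T+4)^2" unfolding f2_def T_def using x by (simp add: algebra_simps of_nat_diff)
  have e2: "f2 (Suc (x + 2)) = 1/(2*T+6)^2" unfolding f2_def T_def using x by (simp add: algebra_simps of_nat_diff)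
  have e3: "f1 (x + 2 - 1) = 1/(2*T+3)^2" unfolding f1_def T_def using x by (simp add: algebra_simps of_nat_diff)
  have s: "Suc (x + 2 - 1) = x + 2" by simp
  show ?thesis using pl_5_1_2[OF T] e0 e1 e2 e3 unfolding Dif_def s by linarith
qed

lemma pl_5_1_3:
  fixes T :: real assumes T: "0 \<le> T"
  shows "1/(2*T+5)^2 + 8/(4*T+9)^2 < 8/(4*T+11)^2 + 1/(2*T+3)^2"
proof -
  have "0 < 84816 + 149448*T + 98048*T^2 + 28416*T^3 + 3072*T^4" using T by (intro add_pos_nonneg) auto
  moreover have "(8/(4*T+11)^2 + 1/(2*T+3)^2) - (1/(2*T+5)^2 + 8/(4*T+9)^2) = (84816 + 149448*T + 98048*T^2 + 28416*T^3 + 3072*T^4) / ((4*T+11)^2 * (2*T+3)^2 * (2*T+5)^2 * (4*T+9)^2)"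
    using T by (simp add: field_simps) (simp add: algebra_simps power2_eq_square power3_eq_cube power4_eq_xxxx eval_nat_numeral)
  moreover have "0 < (4*T+11)^2 * (2*T+3)^2 * (2*T+5)^2 * (4*T+9)^2" using T by simp
  ultimately show ?thesis by (smt (verit) divide_pos_pos)
qed

lemma dl_5_1_3:
  assumes x: "1 \<le> x"
  shows "Dif f1 (x + 2 - 1) < Dif f3 (2 * x + 3)"
proof -
  define T where "T = real x - 1"
  have T: "0 \<le> T" using x by (simp add: T_def)
  have e0: "f1 (x + 2) = 1/(2*T+5)^2" unfolding f1_def T_def using x by (simp add: algebra_simps of_nat_diff)
  have e1: "f3 (2 * x + 3) = 8/(4*T+9)^2" unfolding f3_def T_def using x by (simp add: algebra_simps of_nat_diff)
  have e2: "f3 (Suc (2 * x + 3)) = 8/(4*T+11)^2" unfolding f3_def T_def using x by (simp add: algebra_simps of_nat_diff)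
  have e3: "f1 (x + 2 - 1) = 1/(2*T+3)^2" unfolding f1_def T_def using x by (simp add: algebra_simps of_nat_diff)
  have s: "Suc (x + 2 - 1) = x + 2" by simp
  show ?thesis using pl_5_1_3[OF T] e0 e1 e2 e3 unfolding Dif_def s by linarith
qed

lemma pl_5_2_1:
  fixes T :: real assumes T: "0 \<le> T"
  shows "1/(2*T+4)^2 + 1/(2*T+5)^2 < 1/(2*T+7)^2 + 1/(2*T+2)^2"
proof -
  have "0 < 13164 + 24840*T + 17184*T^2 + 5184*T^3 + 576*T^4" using T by (intro add_pos_nonneg) auto
  moreover have "(1/(2*T+7)^2 + 1/(2*T+2)^2) - (1/(2*T+4)^2 + 1/(2*T+5)^2) = (13164 + 24840*T + 17184*T^2 + 5184*T^3 + 576*T^4) / ((2*T+7)^2 * (2*T+2)^2 * (2*T+4)^2 * (2*T+5)^2)"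
    using T by (simp add: field_simps) (simp add: algebra_simps power2_eq_square power3_eq_cube power4_eq_xxxx eval_nat_numeral)
  moreover have "0 < (2*T+7)^2 * (2*T+2)^2 * (2*T+4)^2 * (2*T+5)^2" using T by simp
  ultimately show ?thesis by (smt (verit) divide_pos_pos)
qed

lemma dl_5_2_1:
  assumes x: "1 \<le> x"
  shows "Dif f2 (x + 2 - 1) < Dif f1 (x + 2)"
proof -
  define T where "T = real x - 1"
  have T: "0 \<le> T" using x by (simp add: T_def)
  have e0: "f2 (x + 2) = 1/(2*T+4)^2" unfolding f2_def T_def using x by (simp add: algebra_simps of_nat_diff)
  have e1: "f1 (x + 2) = 1/(2*T+5)^2" unfolding f1_def T_def using x by (simp add: algebra_simps of_nat_diff)
  have e2: "f1 (Suc (x + 2)) = 1/(2*T+7)^2" unfolding f1_def T_def using x by (simp add: algebra_simps of_nat_diff)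
  have e3: "f2 (x + 2 - 1) = 1/(2*T+2)^2" unfolding f2_def T_def using x by (simp add: algebra_simps of_nat_diff)
  have s: "Suc (x + 2 - 1) = x + 2" by simp
  show ?thesis using pl_5_2_1[OF T] e0 e1 e2 e3 unfolding Dif_def s by linarith
qed

lemma pl_5_2_2:
  fixes T :: real assumes T: "0 \<le> T"
  shows "1/(2*T+4)^2 + 1/(2*T+4)^2 < 1/(2*T+6)^2 + 1/(2*T+2)^2"
proof -
  have "0 < 5632 + 11776*T + 9088*T^2 + 3072*T^3 + 384*T^4" using T by (intro add_pos_nonneg) auto
  moreover have "(1/(2*T+6)^2 + 1/(2*T+2)^2) - (1/(2*T+4)^2 + 1/(2*T+4)^2) = (5632 + 11776*T + 9088*T^2 + 3072*T^3 + 384*T^4) / ((2*T+6)^2 * (2*T+2)^2 * (2*T+4)^2 * (2*T+4)^2)"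
    using T by (simp add: field_simps) (simp add: algebra_simps power2_eq_square power3_eq_cube power4_eq_xxxx eval_nat_numeral)
  moreover have "0 < (2*T+6)^2 * (2*T+2)^2 * (2*T+4)^2 * (2*T+4)^2" using T by simp
  ultimately show ?thesis by (smt (verit) divide_pos_pos)
qed

lemma dl_5_2_2:
  assumes x: "1 \<le> x"
  shows "Dif f2 (x + 2 - 1) < Dif f2 (x + 2)"
proof -
  define T where "T = real x - 1"
  have T: "0 \<le> T" using x by (simp add: T_def)
  have e0: "f2 (x + 2) = 1/(2*T+4)^2" unfolding f2_def T_def using x by (simp add: algebra_simps of_nat_diff)
  have e1: "f2 (x + 2) = 1/(2*T+4)^2" unfolding f2_def T_def using x by (simp add: algebra_simps of_nat_diff)
  have e2: "f2 (Suc (x + 2)) = 1/(2*T+6)^2" unfolding f2_def T_def using x by (simp add: algebra_simps of_nat_diff)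
  have e3: "f2 (x + 2 - 1) = 1/(2*T+2)^2" unfolding f2_def T_def using x by (simp add: algebra_simps of_nat_diff)
  have s: "Suc (x + 2 - 1) = x + 2" by simp
  show ?thesis using pl_5_2_2[OF T] e0 e1 e2 e3 unfolding Dif_def s by linarith
qed

lemma pl_5_2_3:
  fixes T :: real assumes T: "0 \<le> T"
  shows "1/(2*T+4)^2 + 8/(4*T+9)^2 < 8/(4*T+11)^2 + 1/(2*T+2)^2"
proof -
  have "0 < 97132 + 198856*T + 150400*T^2 + 49920*T^3 + 6144*T^4" using T by (intro add_pos_nonneg) auto
  moreover have "(8/(4*T+11)^2 + 1/(2*T+2)^2) - (1/(2*T+4)^2 + 8/(4*T+9)^2) = (97132 + 198856*T + 150400*T^2 + 49920*T^3 + 6144*T^4) / ((4*T+11)^2 * (2*T+2)^2 * (2*T+4)^2 * (4*T+9)^2)"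
    using T by (simp add: field_simps) (simp add: algebra_simps power2_eq_square power3_eq_cube power4_eq_xxxx eval_nat_numeral)
  moreover have "0 < (4*T+11)^2 * (2*T+2)^2 * (2*T+4)^2 * (4*T+9)^2" using T by simp
  ultimately show ?thesis by (smt (verit) divide_pos_pos)
qed

lemma dl_5_2_3:
  assumes x: "1 \<le> x"
  shows "Dif f2 (x + 2 - 1) < Dif f3 (2 * x + 3)"
proof -
  define T where "T = real x - 1"
  have T: "0 \<le> T" using x by (simp add: T_def)
  have e0: "f2 (x + 2) = 1/(2*T+4)^2" unfolding f2_def T_def using x by (simp add: algebra_simps of_nat_diff)
  have e1: "f3 (2 * x + 3) = 8/(4*T+9)^2" unfolding f3_def T_def using x by (simp add: algebra_simps of_nat_diff)
  have e2: "f3 (Suc (2 * x + 3)) = 8/(4*T+11)^2" unfolding f3_def T_def using x by (simp add: algebra_simps of_nat_diff)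
  have e3: "f2 (x + 2 - 1) = 1/(2*T+2)^2" unfolding f2_def T_def using x by (simp add: algebra_simps of_nat_diff)
  have s: "Suc (x + 2 - 1) = x + 2" by simp
  show ?thesis using pl_5_2_3[OF T] e0 e1 e2 e3 unfolding Dif_def s by linarith
qed

lemma pl_5_3_1:
  fixes T :: real assumes T: "0 \<le> T"
  shows "8/(4*T+9)^2 + 1/(2*T+5)^2 < 1/(2*T+7)^2 + 8/(4*T+7)^2"
proof -
  have "0 < 218344 + 361592*T + 222976*T^2 + 60672*T^3 + 6144*T^4" using T by (intro add_pos_nonneg) auto
  moreover have "(1/(2*T+7)^2 + 8/(4*T+7)^2) - (8/(4*T+9)^2 + 1/(2*T+5)^2) = (218344 + 361592*T + 222976*T^2 + 60672*T^3 + 6144*T^4) / ((2*T+7)^2 * (4*T+7)^2 * (4*T+9)^2 * (2*T+5)^2)"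
    using T by (simp add: field_simps) (simp add: algebra_simps power2_eq_square power3_eq_cube power4_eq_xxxx eval_nat_numeral)
  moreover have "0 < (2*T+7)^2 * (4*T+7)^2 * (4*T+9)^2 * (2*T+5)^2" using T by simp
  ultimately show ?thesis by (smt (verit) divide_pos_pos)
qed

lemma dl_5_3_1:
  assumes x: "1 \<le> x"
  shows "Dif f3 (2 * x + 3 - 1) < Dif f1 (x + 2)"
proof -
  define T where "T = real x - 1"
  have T: "0 \<le> T" using x by (simp add: T_def)
  have e0: "f3 (2 * x + 3) = 8/(4*T+9)^2" unfolding f3_def T_def using x by (simp add: algebra_simps of_nat_diff)
  have e1: "f1 (x + 2) = 1/(2*T+5)^2" unfolding f1_def T_def using x by (simp add: algebra_simps of_nat_diff)
  have e2: "f1 (Suc (x + 2)) = 1/(2*T+7)^2" unfolding f1_def T_def using x by (simp add: algebra_simps of_nat_diff)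
  have e3: "f3 (2 * x + 3 - 1) = 8/(4*T+7)^2" unfolding f3_def T_def using x by (simp add: algebra_simps of_nat_diff)
  have s: "Suc (2 * x + 3 - 1) = 2 * x + 3" by simp
  show ?thesis using pl_5_3_1[OF T] e0 e1 e2 e3 unfolding Dif_def s by linarith
qed

lemma pl_5_3_2:
  fixes T :: real assumes T: "0 \<le> T"
  shows "8/(4*T+9)^2 + 1/(2*T+4)^2 < 1/(2*T+6)^2 + 8/(4*T+7)^2"
proof -
  have "0 < 68076 + 126456*T + 87680*T^2 + 26880*T^3 + 3072*T^4" using T by (intro add_pos_nonneg) auto
  moreover have "(1/(2*T+6)^2 + 8/(4*T+7)^2) - (8/(4*T+9)^2 + 1/(2*T+4)^2) = (68076 + 126456*T + 87680*T^2 + 26880*T^3 + 3072*T^4) / ((2*T+6)^2 * (4*T+7)^2 * (4*T+9)^2 * (2*T+4)^2)"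
    using T by (simp add: field_simps) (simp add: algebra_simps power2_eq_square power3_eq_cube power4_eq_xxxx eval_nat_numeral)
  moreover have "0 < (2*T+6)^2 * (4*T+7)^2 * (4*T+9)^2 * (2*T+4)^2" using T by simp
  ultimately show ?thesis by (smt (verit) divide_pos_pos)
qed

lemma dl_5_3_2:
  assumes x: "1 \<le> x"
  shows "Dif f3 (2 * x + 3 - 1) < Dif f2 (x + 2)"
proof -
  define T where "T = real x - 1"
  have T: "0 \<le> T" using x by (simp add: T_def)
  have e0: "f3 (2 * x + 3) = 8/(4*T+9)^2" unfolding f3_def T_def using x by (simp add: algebra_simps of_nat_diff)
  have e1: "f2 (x + 2) = 1/(2*T+4)^2" unfolding f2_def T_def using x by (simp add: algebra_simps of_nat_diff)
  have e2: "f2 (Suc (x + 2)) = 1/(2*T+6)^2" unfolding f2_def T_def using x by (simp add: algebra_simps of_nat_diff)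
  have e3: "f3 (2 * x + 3 - 1) = 8/(4*T+7)^2" unfolding f3_def T_def using x by (simp add: algebra_simps of_nat_diff)
  have s: "Suc (2 * x + 3 - 1) = 2 * x + 3" by simp
  show ?thesis using pl_5_3_2[OF T] e0 e1 e2 e3 unfolding Dif_def s by linarith
qed

lemma pl_5_3_3:
  fixes T :: real assumes T: "0 \<le> T"
  shows "8/(4*T+9)^2 + 8/(4*T+9)^2 < 8/(4*T+11)^2 + 8/(4*T+7)^2"
proof -
  have "0 < 1238976 + 2221056*T + 1488896*T^2 + 442368*T^3 + 49152*T^4" using T by (intro add_pos_nonneg) auto
  moreover have "(8/(4*T+11)^2 + 8/(4*T+7)^2) - (8/(4*T+9)^2 + 8/(4*T+9)^2) = (1238976 + 2221056*T + 1488896*T^2 + 442368*T^3 + 49152*T^4) / ((4*T+11)^2 * (4*T+7)^2 * (4*T+9)^2 * (4*T+9)^2)"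
    using T by (simp add: field_simps) (simp add: algebra_simps power2_eq_square power3_eq_cube power4_eq_xxxx eval_nat_numeral)
  moreover have "0 < (4*T+11)^2 * (4*T+7)^2 * (4*T+9)^2 * (4*T+9)^2" using T by simp
  ultimately show ?thesis by (smt (verit) divide_pos_pos)
qed

lemma dl_5_3_3:
  assumes x: "1 \<le> x"
  shows "Dif f3 (2 * x + 3 - 1) < Dif f3 (2 * x + 3)"
proof -
  define T where "T = real x - 1"
  have T: "0 \<le> T" using x by (simp add: T_def)
  have e0: "f3 (2 * x + 3) = 8/(4*T+9)^2" unfolding f3_def T_def using x by (simp add: algebra_simps of_nat_diff)
  have e1: "f3 (2 * x + 3) = 8/(4*T+9)^2" unfolding f3_def T_def using x by (simp add: algebra_simps of_nat_diff)
  have e2: "f3 (Suc (2 * x + 3)) = 8/(4*T+11)^2" unfolding f3_def T_def using x by (simp add: algebra_simps of_nat_diff)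
  have e3: "f3 (2 * x + 3 - 1) = 8/(4*T+7)^2" unfolding f3_def T_def using x by (simp add: algebra_simps of_nat_diff)
  have s: "Suc (2 * x + 3 - 1) = 2 * x + 3" by simp
  show ?thesis using pl_5_3_3[OF T] e0 e1 e2 e3 unfolding Dif_def s by linarith
qed

lemma pc_f1:
  fixes T :: real assumes T: "0 \<le> T"
  shows "1/(2*T+3)^2 + 1/(2*T+3)^2 < 1/(2*T+5)^2 + 1/(2*T+1)^2"
proof -
  have "0 < 1656 + 4800*T + 5056*T^2 + 2304*T^3 + 384*T^4" using T by (intro add_pos_nonneg) auto
  moreover have "(1/(2*T+5)^2 + 1/(2*T+1)^2) - (1/(2*T+3)^2 + 1/(2*T+3)^2) = (1656 + 4800*T + 5056*T^2 + 2304*T^3 + 384*T^4) / ((2*T+5)^2 * (2*T+1)^2 * (2*T+3)^2 * (2*T+3)^2)"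
    using T by (simp add: field_simps) (simp add: algebra_simps power2_eq_square power3_eq_cube power4_eq_xxxx eval_nat_numeral)
  moreover have "0 < (2*T+5)^2 * (2*T+1)^2 * (2*T+3)^2 * (2*T+3)^2" using T by simp
  ultimately show ?thesis by (smt (verit) divide_pos_pos)
qed

lemma dconv_f1: "dconv f1 1"
  unfolding dconv_def
proof (intro allI impI)
  fix j :: nat assume j: "1 \<le> j"
  define T where "T = real j - 1"
  have T: "0 \<le> T" using j by (simp add: T_def)
  have e0: "f1 j = 1/(2*T+1)^2" unfolding f1_def T_def using j by (simp add: algebra_simps)
  have e1: "f1 (Suc j) = 1/(2*T+3)^2" unfolding f1_def T_def using j by (simp add: algebra_simps)
  have e2: "f1 (Suc (Suc j)) = 1/(2*T+5)^2" unfolding f1_def T_def using j by (simp add: algebra_simps)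
  show "Dif f1 j \<le> Dif f1 (Suc j)" using pc_f1[OF T] e0 e1 e2 unfolding Dif_def by simp
qed

lemma pc_f2:
  fixes T :: real assumes T: "0 \<le> T"
  shows "1/(2*T+4)^2 + 1/(2*T+4)^2 < 1/(2*T+6)^2 + 1/(2*T+2)^2"
proof -
  have "0 < 5632 + 11776*T + 9088*T^2 + 3072*T^3 + 384*T^4" using T by (intro add_pos_nonneg) auto
  moreover have "(1/(2*T+6)^2 + 1/(2*T+2)^2) - (1/(2*T+4)^2 + 1/(2*T+4)^2) = (5632 + 11776*T + 9088*T^2 + 3072*T^3 + 384*T^4) / ((2*T+6)^2 * (2*T+2)^2 * (2*T+4)^2 * (2*T+4)^2)"
    using T by (simp add: field_simps) (simp add: algebra_simps power2_eq_square power3_eq_cube power4_eq_xxxx eval_nat_numeral)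
  moreover have "0 < (2*T+6)^2 * (2*T+2)^2 * (2*T+4)^2 * (2*T+4)^2" using T by simp
  ultimately show ?thesis by (smt (verit) divide_pos_pos)
qed

lemma dconv_f2: "dconv f2 2"
  unfolding dconv_def
proof (intro allI impI)
  fix j :: nat assume j: "2 \<le> j"
  define T where "T = real j - 2"
  have T: "0 \<le> T" using j by (simp add: T_def)
  have e0: "f2 j = 1/(2*T+2)^2" unfolding f2_def T_def using j by (simp add: algebra_simps)
  have e1: "f2 (Suc j) = 1/(2*T+4)^2" unfolding f2_def T_def using j by (simp add: algebra_simps)
  have e2: "f2 (Suc (Suc j)) = 1/(2*T+6)^2" unfolding f2_def T_def using j by (simp add: algebra_simps)
  show "Dif f2 j \<le> Dif f2 (Suc j)" using pc_f2[OF T] e0 e1 e2 unfolding Dif_def by simp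
qed

lemma pc_f3:
  fixes T :: real assumes T: "0 \<le> T"
  shows "8/(2*T+3)^2 + 8/(2*T+3)^2 < 8/(2*T+5)^2 + 8/(2*T+1)^2"
proof -
  have "0 < 13248 + 38400*T + 40448*T^2 + 18432*T^3 + 3072*T^4" using T by (intro add_pos_nonneg) auto
  moreover have "(8/(2*T+5)^2 + 8/(2*T+1)^2) - (8/(2*T+3)^2 + 8/(2*T+3)^2) = (13248 + 38400*T + 40448*T^2 + 18432*T^3 + 3072*T^4) / ((2*T+5)^2 * (2*T+1)^2 * (2*T+3)^2 * (2*T+3)^2)"
    using T by (simp add: field_simps) (simp add: algebra_simps power2_eq_square power3_eq_cube power4_eq_xxxx eval_nat_numeral)
  moreover have "0 < (2*T+5)^2 * (2*T+1)^2 * (2*T+3)^2 * (2*T+3)^2" using T by simp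
  ultimately show ?thesis by (smt (verit) divide_pos_pos)
qed

lemma dconv_f3: "dconv f3 1"
  unfolding dconv_def
proof (intro allI impI)
  fix j :: nat assume j: "1 \<le> j"
  define T where "T = real j - 1"
  have T: "0 \<le> T" using j by (simp add: T_def)
  have e0: "f3 j = 8/(2*T+1)^2" unfolding f3_def T_def using j by (simp add: algebra_simps)
  have e1: "f3 (Suc j) = 8/(2*T+3)^2" unfolding f3_def T_def using j by (simp add: algebra_simps)
  have e2: "f3 (Suc (Suc j)) = 8/(2*T+5)^2" unfolding f3_def T_def using j by (simp add: algebra_simps)
  show "Dif f3 j \<le> Dif f3 (Suc j)" using pc_f3[OF T] e0 e1 e2 unfolding Dif_def by simp
qed
lemma f1_dec: "1 \<le> k \<Longrightarrow> Dif f1 k < 0"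
proof -
  assume k: "1 \<le> k"
  have a: "0 < 2*real k - 1" using k by simp
  have "(2*real k - 1)^2 < (2*real (Suc k) - 1)^2" using a by (intro power_strict_mono) auto
  then have "1/(2*real (Suc k) - 1)^2 < 1/(2*real k - 1)^2" using a by (intro divide_strict_left_mono) auto
  then show ?thesis unfolding Dif_def f1_def by simp
qed

lemma pick_lam:
  fixes L1 L2 L3 H1 H2 H3 :: real
  assumes "L1 < H1" "L1 < H2" "L1 < H3" "L2 < H1" "L2 < H2" "L2 < H3" "L3 < H1" "L3 < H2" "L3 < H3" "H1 < 0"
  shows "\<exists>lam. (L1 < lam \<and> lam < H1) \<and> (L2 < lam \<and> lam < H2) \<and> (L3 < lam \<and> lam < H3) \<and> lam < 0"
proof (intro exI[of _ "(max L1 (max L2 L3) + min H1 (min H2 H3))/2"])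
  show "(L1 < (max L1 (max L2 L3) + min H1 (min H2 H3))/2 \<and> (max L1 (max L2 L3) + min H1 (min H2 H3))/2 < H1) \<and>
    (L2 < (max L1 (max L2 L3) + min H1 (min H2 H3))/2 \<and> (max L1 (max L2 L3) + min H1 (min H2 H3))/2 < H2) \<and>
    (L3 < (max L1 (max L2 L3) + min H1 (min H2 H3))/2 \<and> (max L1 (max L2 L3) + min H1 (min H2 H3))/2 < H3) \<and>
    (max L1 (max L2 L3) + min H1 (min H2 H3))/2 < 0"
    using assms unfolding max_def min_def by (simp split: if_split; linarith)
qed

lemma class_2:
  fixes x y1 y2 y3 :: nat
  assumes x: "1 \<le> x" and y: "1 \<le> y1" "2 \<le> y2" "1 \<le> y3"
    and sum: "y1 + y2 + y3 \<le> (x + 1) + (x + 2) + (2 * x + 1)"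
    and val: "f1 y1 + f2 y2 + f3 y3 \<le> f1 (x + 1) + f2 (x + 2) + f3 (2 * x + 1)"
  shows "y1 = x + 1 \<and> y2 = x + 2 \<and> y3 = 2 * x + 1"
proof -
  have neg: "Dif f1 (x + 1) < 0" by (rule f1_dec) simp
  obtain lam where lam: "Dif f1 (x + 1 - 1) < lam" "lam < Dif f1 (x + 1)"
    "Dif f2 (x + 2 - 1) < lam" "lam < Dif f2 (x + 2)"
    "Dif f3 (2 * x + 1 - 1) < lam" "lam < Dif f3 (2 * x + 1)" "lam < 0"
    using pick_lam[OF dl_2_1_1[OF x] dl_2_1_2[OF x] dl_2_1_3[OF x] dl_2_2_1[OF x] dl_2_2_2[OF x] dl_2_2_3[OF x] dl_2_3_1[OF x] dl_2_3_2[OF x] dl_2_3_3[OF x] neg] by blast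
  show ?thesis
    by (rule sep[OF dconv_f1 dconv_f2 dconv_f3 _ _ _ y lam sum val]) (use x in auto)
qed

lemma class_3:
  fixes x y1 y2 y3 :: nat
  assumes x: "1 \<le> x" and y: "1 \<le> y1" "2 \<le> y2" "1 \<le> y3"
    and sum: "y1 + y2 + y3 \<le> (x + 1) + (x + 2) + (2 * x + 2)"
    and val: "f1 y1 + f2 y2 + f3 y3 \<le> f1 (x + 1) + f2 (x + 2) + f3 (2 * x + 2)"
  shows "y1 = x + 1 \<and> y2 = x + 2 \<and> y3 = 2 * x + 2"
proof -
  have neg: "Dif f1 (x + 1) < 0" by (rule f1_dec) simp
  obtain lam where lam: "Dif f1 (x + 1 - 1) < lam" "lam < Dif f1 (x + 1)"
    "Dif f2 (x + 2 - 1) < lam" "lam < Dif f2 (x + 2)"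
    "Dif f3 (2 * x + 2 - 1) < lam" "lam < Dif f3 (2 * x + 2)" "lam < 0"
    using pick_lam[OF dl_3_1_1[OF x] dl_3_1_2[OF x] dl_3_1_3[OF x] dl_3_2_1[OF x] dl_3_2_2[OF x] dl_3_2_3[OF x] dl_3_3_1[OF x] dl_3_3_2[OF x] dl_3_3_3[OF x] neg] by blast
  show ?thesis
    by (rule sep[OF dconv_f1 dconv_f2 dconv_f3 _ _ _ y lam sum val]) (use x in auto)
qed

lemma class_4:
  fixes x y1 y2 y3 :: nat
  assumes x: "1 \<le> x" and y: "1 \<le> y1" "2 \<le> y2" "1 \<le> y3"
    and sum: "y1 + y2 + y3 \<le> (x + 2) + (x + 2) + (2 * x + 2)"
    and val: "f1 y1 + f2 y2 + f3 y3 \<le> f1 (x + 2) + f2 (x + 2) + f3 (2 * x + 2)"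
  shows "y1 = x + 2 \<and> y2 = x + 2 \<and> y3 = 2 * x + 2"
proof -
  have neg: "Dif f1 (x + 2) < 0" by (rule f1_dec) simp
  obtain lam where lam: "Dif f1 (x + 2 - 1) < lam" "lam < Dif f1 (x + 2)"
    "Dif f2 (x + 2 - 1) < lam" "lam < Dif f2 (x + 2)"
    "Dif f3 (2 * x + 2 - 1) < lam" "lam < Dif f3 (2 * x + 2)" "lam < 0"
    using pick_lam[OF dl_4_1_1[OF x] dl_4_1_2[OF x] dl_4_1_3[OF x] dl_4_2_1[OF x] dl_4_2_2[OF x] dl_4_2_3[OF x] dl_4_3_1[OF x] dl_4_3_2[OF x] dl_4_3_3[OF x] neg] by blast
  show ?thesis
    by (rule sep[OF dconv_f1 dconv_f2 dconv_f3 _ _ _ y lam sum val]) (use x in auto)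
qed

lemma class_5:
  fixes x y1 y2 y3 :: nat
  assumes x: "1 \<le> x" and y: "1 \<le> y1" "2 \<le> y2" "1 \<le> y3"
    and sum: "y1 + y2 + y3 \<le> (x + 2) + (x + 2) + (2 * x + 3)"
    and val: "f1 y1 + f2 y2 + f3 y3 \<le> f1 (x + 2) + f2 (x + 2) + f3 (2 * x + 3)"
  shows "y1 = x + 2 \<and> y2 = x + 2 \<and> y3 = 2 * x + 3"
proof -
  have neg: "Dif f1 (x + 2) < 0" by (rule f1_dec) simp
  obtain lam where lam: "Dif f1 (x + 2 - 1) < lam" "lam < Dif f1 (x + 2)"
    "Dif f2 (x + 2 - 1) < lam" "lam < Dif f2 (x + 2)"
    "Dif f3 (2 * x + 3 - 1) < lam" "lam < Dif f3 (2 * x + 3)" "lam < 0"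
    using pick_lam[OF dl_5_1_1[OF x] dl_5_1_2[OF x] dl_5_1_3[OF x] dl_5_2_1[OF x] dl_5_2_2[OF x] dl_5_2_3[OF x] dl_5_3_1[OF x] dl_5_3_2[OF x] dl_5_3_3[OF x] neg] by blast
  show ?thesis
    by (rule sep[OF dconv_f1 dconv_f2 dconv_f3 _ _ _ y lam sum val]) (use x in auto)
qed



lemma lower_all:
  fixes G :: "real set"
  assumes fin: "finite G" and q: "1/4 \<in> G" and h: "1/2 \<in> G"
  defines "k \<equiv> card (G \<inter> {0..1/4})" and "l \<equiv> card (G \<inter> {1/4..1/2})"
    and "m \<equiv> card (G \<inter> {1/2..1})"
    and "e1 \<equiv> G \<inter> {..<0} \<noteq> {}" and "e2 \<equiv> G \<inter> {1<..} \<noteq> {}"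
  shows "k + l + m + (if e1 then 1 else 0) + (if e2 then 1 else 0) \<le> card G + 2"
    and "((if e1 then 1/(2*real k)^2 else f1 k) + f2 l + (if e2 then 8/(2*real m)^2 else f3 m))/192
          \<le> integral {0..1} (mind G)"
    and "1 \<le> k" "2 \<le> l" "1 \<le> m"
proof -
  define A where "A = G \<inter> {0..1/4}"
  define B where "B = G \<inter> {1/4..1/2}"
  define C where "C = G \<inter> {1/2..1}"
  define Lf where "Lf = G \<inter> {..<0}"
  define Rt where "Rt = G \<inter> {1<..}"
  have fins: "finite A" "finite B" "finite C" "finite Lf" "finite Rt"
    using fin by (auto simp: A_def B_def C_def Lf_def Rt_def)
  have AB: "A \<inter> B = {1/4}" using q by (auto simp: A_def B_def)
  have ABC: "(A \<union> B) \<inter> C = {1/2}" using h by (auto simp: A_def B_def C_def)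
  have c1: "card (A \<union> B) + 1 = k + l"
    using card_Un_Int[OF fins(1,2)] AB by (simp add: k_def l_def A_def B_def)
  have c2: "card (A \<union> B \<union> C) + 1 = card (A \<union> B) + m"
    using card_Un_Int[of "A \<union> B" C] fins ABC by (simp add: m_def C_def)
  have d1: "Lf \<inter> (A \<union> B \<union> C) = {}" by (auto simp: Lf_def A_def B_def C_def)
  have d2: "(Lf \<union> (A \<union> B \<union> C)) \<inter> Rt = {}" by (auto simp: Lf_def A_def B_def C_def Rt_def)
  have c3: "card (Lf \<union> (A \<union> B \<union> C) \<union> Rt) = card Lf + card (A \<union> B \<union> C) + card Rt"
    using card_Un_disjoint[OF _ _ d2] card_Un_disjoint[OF _ _ d1] fins by simp
  have "card (Lf \<union> (A \<union> B \<union> C) \<union> Rt) \<le> card G"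
    by (rule card_mono[OF fin]) (auto simp: Lf_def A_def B_def C_def Rt_def)
  moreover have "(if e1 then 1 else 0) \<le> card Lf"
    using fins(4) by (auto simp: e1_def Lf_def card_gt_0_iff Suc_le_eq)
  moreover have "(if e2 then 1 else 0) \<le> card Rt"
    using fins(5) by (auto simp: e2_def Rt_def card_gt_0_iff Suc_le_eq)
  ultimately show "k + l + m + (if e1 then 1 else 0) + (if e2 then 1 else 0) \<le> card G + 2"
    using c1 c2 c3 by linarith
  have "card {1/4::real} \<le> k" unfolding k_def by (rule card_mono) (use fin q in auto)
  then show k1: "1 \<le> k" by simp
  have "card {1/4::real, 1/2} \<le> l" unfolding l_def by (rule card_mono) (use fin q h in auto)
  then show l2: "2 \<le> l" by simp
  have "card {1/2::real} \<le> m" unfolding m_def by (rule card_mono) (use fin h in auto)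
  then show m1: "1 \<le> m" by simp
  have G: "G \<noteq> {}" using q by auto
  have comb1: "integral {0..1/4} (mind G) + integral {1/4..1} (mind G) = integral {0..1} (mind G)"
    by (intro Henstock_Kurzweil_Integration.integral_combine mind_int[OF fin G]) auto
  have comb2: "integral {1/4..1/2} (mind G) + integral {1/2..1} (mind G) = integral {1/4..1} (mind G)"
    by (intro Henstock_Kurzweil_Integration.integral_combine mind_int[OF fin G]) auto
  have kp: "0 < real k" using k1 by simp
  have lp: "0 < real l - 1" using l2 by simp
  have mp: "0 < real m" using m1 by simp
  have IL: "(if e1 then 1/(2*real k)^2 else f1 k)/192 \<le> integral {0..1/4} (mind G)"
  proof (cases e1)
    case True
    have "(1/4 - 0)^3/(12*(real k)^2) \<le> integral {0..1/4} (mind G)"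
      using left_lower(1)[OF fin q, of 0] by (simp add: k_def)
    moreover have "(1/4 - 0)^3/(12*(real k)^2) = (1/(2*real k)^2)/192"
      using kp by (simp add: field_simps power2_eq_square)
    ultimately show ?thesis using True by simp
  next
    case False
    then have "G \<inter> {..<0} = {}" by (simp add: e1_def)
    then have "(1/4 - 0)^3/(3*(2*real k - 1)^2) \<le> integral {0..1/4} (mind G)"
      using left_lower(2)[OF fin q, of 0] by (simp add: k_def)
    moreover have "(1/4 - 0)^3/(3*(2*real k - 1)^2) = f1 k/192"
      unfolding f1_def by (simp add: field_simps power2_eq_square)
    ultimately show ?thesis using False by simp
  qed
  have IM: "f2 l/192 \<le> integral {1/4..1/2} (mind G)"
  proof -
    have "(1/2 - 1/4)^3/(12*(real l - 1)^2) \<le> integral {1/4..1/2} (mind G)"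
      using both_lower[OF fin q h] by (simp add: l_def)
    moreover have "(1/2 - 1/4)^3/(12*(real l - 1)^2) = f2 l/192"
    proof -
      have "2*real l - 2 = 2*(real l - 1)" by simp
      then show ?thesis unfolding f2_def using lp by (simp add: field_simps power2_eq_square)
    qed
    ultimately show ?thesis by simp
  qed
  have IR: "(if e2 then 8/(2*real m)^2 else f3 m)/192 \<le> integral {1/2..1} (mind G)"
  proof (cases e2)
    case True
    have "(1 - 1/2)^3/(12*(real m)^2) \<le> integral {1/2..1} (mind G)"
      using right_lower(1)[OF fin h, of 1] by (simp add: m_def)
    moreover have "(1 - 1/2)^3/(12*(real m)^2) = (8/(2*real m)^2)/192"
      using mp by (simp add: field_simps power2_eq_square)
    ultimately show ?thesis using True by simp
  next
    case False
    then have "G \<inter> {1<..} = {}" by (simp add: e2_def)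
    then have "(1 - 1/2)^3/(3*(2*real m - 1)^2) \<le> integral {1/2..1} (mind G)"
      using right_lower(2)[OF fin h, of 1] by (simp add: m_def)
    moreover have "(1 - 1/2)^3/(3*(2*real m - 1)^2) = f3 m/192"
    proof -
      have gen: "\<And>D::real. (1 - 1/2)^3/(3*D^2) = 8/D^2/192"
        by (case_tac "D = 0") (simp_all add: field_simps)
      show ?thesis unfolding f3_def gen ..
    qed
    ultimately show ?thesis using False by simp
  qed
  show "((if e1 then 1/(2*real k)^2 else f1 k) + f2 l + (if e2 then 8/(2*real m)^2 else f3 m))/192
          \<le> integral {0..1} (mind G)"
    using IL IM IR comb1 comb2 unfolding add_divide_distrib by linarith
qed


lemma upper_all:
  fixes k l m :: nat
  assumes k: "1 \<le> k" and l: "2 \<le> l" and m: "1 \<le> m"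
  shows "\<exists>\<alpha>. finite \<alpha> \<and> card \<alpha> \<le> k + l + m - 4 \<and>
           integral {0..1} (mind (\<alpha> \<union> {1/4, 1/2})) \<le> (f1 k + f2 l + f3 m)/192"
proof -
  define h1 where "h1 = 1/(4*(2*real k - 1))"
  define h2 where "h2 = 1/(4*(real l - 1))"
  define h3 where "h3 = 1/(2*(2*real m - 1))"
  define A where "A = (\<lambda>i. (2*real i + 1)*h1) ` {..<k-1}"
  define B where "B = (\<lambda>i. 1/4 + real i * h2) ` {1..l-2}"
  define C where "C = (\<lambda>i. 1/2 + real i * (2*h3)) ` {1..m-1}"
  define \<alpha> where "\<alpha> = A \<union> B \<union> C"
  define T where "T = \<alpha> \<union> {1/4, 1/2}"
  have fin\<alpha>: "finite \<alpha>" by (simp add: \<alpha>_def A_def B_def C_def)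
  have finT: "finite T" using fin\<alpha> by (simp add: T_def)
  have TG: "T \<noteq> {}" by (simp add: T_def)
  have "card \<alpha> \<le> card A + card B + card C"
    unfolding \<alpha>_def by (meson card_Un_le add_right_mono le_trans)
  moreover have "card A \<le> k - 1" unfolding A_def by (metis card_image_le card_lessThan finite_lessThan)
  moreover have "card B \<le> l - 2" unfolding B_def by (metis card_image_le card_atLeastAtMost finite_atLeastAtMost diff_Suc_1)
  moreover have "card C \<le> m - 1" unfolding C_def by (metis card_image_le card_atLeastAtMost finite_atLeastAtMost diff_Suc_1)
  ultimately have card: "card \<alpha> \<le> k + l + m - 4" using k l m by linarith
  have kp: "0 < 2*real k - 1" using k by simp
  have lp: "0 < real l - 1" using l by simp
  have mp: "0 < 2*real m - 1" using m by simp
  have h1p: "0 < h1" using kp by (simp add: h1_def)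
  have h2p: "0 < h2" using lp by (simp add: h2_def)
  have h3p: "0 < h3" using mp by (simp add: h3_def)
  have rk: "real (k - 1) = real k - 1" using k by (simp add: of_nat_diff)
  have rl: "real (l - 1) = real l - 1" using l by (simp add: of_nat_diff)
  have rm: "real (m - 1) = real m - 1" using m by (simp add: of_nat_diff)
  have hk: "h1 + real (k-1) * (2*h1) = 1/4"
    unfolding rk h1_def using kp by (simp add: field_simps)
  have hl: "1/4 + real (l-1) * h2 = 1/2"
    unfolding rl h2_def using lp by (simp add: field_simps)
  have hm: "1/2 + real (m-1) * (2*h3) = 1 - h3"
    unfolding rm h3_def using mp by (simp add: field_simps)
  have mA: "\<forall>i\<le>k-1. h1 + real i * (2*h1) \<in> T"
  proof (intro allI impI)
    fix i assume i: "i \<le> k - 1"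
    show "h1 + real i * (2*h1) \<in> T"
    proof (cases "i = k - 1")
      case True then show ?thesis using hk by (simp add: T_def)
    next
      case False
      then have "i \<in> {..<k-1}" using i by simp
      then have "(2*real i + 1)*h1 \<in> A" unfolding A_def by blast
      moreover have "(2*real i + 1)*h1 = h1 + real i * (2*h1)" by (simp add: algebra_simps)
      ultimately show ?thesis by (simp add: T_def \<alpha>_def)
    qed
  qed
  have mB: "\<forall>i\<le>l-1. 1/4 + real i * h2 \<in> T"
  proof (intro allI impI)
    fix i assume i: "i \<le> l - 1"
    show "1/4 + real i * h2 \<in> T"
    proof (cases "i = l - 1")
      case True
      then have "1/4 + real i * h2 = 1/2" using hl by (simp only:)
      then show ?thesis by (simp add: T_def)
    next
      case False
      show ?thesis
      proof (cases "i = 0")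
        case True then show ?thesis by (simp add: T_def)
      next
        case False
        then have "i \<in> {1..l-2}" using i \<open>i \<noteq> l - 1\<close> by auto
        then have "1/4 + real i * h2 \<in> B" unfolding B_def by blast
        then show ?thesis by (simp add: T_def \<alpha>_def)
      qed
    qed
  qed
  have mC: "\<forall>i\<le>m-1. 1/2 + real i * (2*h3) \<in> T"
  proof (intro allI impI)
    fix i assume i: "i \<le> m - 1"
    show "1/2 + real i * (2*h3) \<in> T"
    proof (cases "i = 0")
      case True then show ?thesis by (simp add: T_def)
    next
      case False
      then have "i \<in> {1..m-1}" using i by auto
      then have "1/2 + real i * (2*h3) \<in> C" unfolding C_def by blast
      then show ?thesis by (simp add: T_def \<alpha>_def)
    qed
  qed
  have h1T: "h1 \<in> T" using mA by force
  have h3T: "1 - h3 \<in> T" using mC hm by force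
  have "0 \<le> real (k-1) * (2*h1)" using h1p by simp
  then have h1q: "h1 \<le> 1/4" using hk by linarith
  have "0 \<le> real (m-1) * (2*h3)" using h3p by simp
  then have h3q: "1/2 \<le> 1 - h3" using hm by linarith
  have I1a: "integral {0..h1} (mind T) \<le> (h1 - 0)^3/3"
    using endL_upper[OF finT h1T, of 0] h1p by simp
  have I1b: "integral {h1..1/4} (mind T) \<le> real (k-1) * (2*h1)^3/12"
    using both_upper[OF finT _ mA] h1p unfolding hk by simp
  have I2: "integral {1/4..1/2} (mind T) \<le> real (l-1) * h2^3/12"
    using both_upper[OF finT _ mB] h2p unfolding hl by simp
  have I3a: "integral {1/2..1-h3} (mind T) \<le> real (m-1) * (2*h3)^3/12"
    using both_upper[OF finT _ mC] h3p unfolding hm by simp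
  have I3b: "integral {1-h3..1} (mind T) \<le> (1 - (1-h3))^3/3"
    using endR_upper[OF finT h3T, of 1] h3p by simp
  note ic = Henstock_Kurzweil_Integration.integral_combine[OF _ _ mind_int[OF finT TG]]
  have c1: "integral {0..h1} (mind T) + integral {h1..1} (mind T) = integral {0..1} (mind T)"
    using h1p h1q by (intro ic) auto
  have c2: "integral {h1..1/4} (mind T) + integral {1/4..1} (mind T) = integral {h1..1} (mind T)"
    using h1q by (intro ic) auto
  have c3: "integral {1/4..1/2} (mind T) + integral {1/2..1} (mind T) = integral {1/4..1} (mind T)"
    by (intro ic) auto
  have c4: "integral {1/2..1-h3} (mind T) + integral {1-h3..1} (mind T) = integral {1/2..1} (mind T)"
    using h3q h3p by (intro ic) auto
  have v1: "(h1 - 0)^3/3 + real (k-1) * (2*h1)^3/12 = f1 k/192"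
  proof -
    have gen: "\<And>D::real. 0 < D \<Longrightarrow> (1/(4*D) - 0)^3/3 + ((D-1)/2) * (2*(1/(4*D)))^3/12 = 1/D^2/192"
      by (simp add: field_simps power2_eq_square power3_eq_cube)
    have e: "real k - 1 = ((2*real k - 1) - 1)/2" by simp
    show ?thesis unfolding rk h1_def f1_def e using gen[OF kp] by simp
  qed
  have v2: "real (l-1) * h2^3/12 = f2 l/192"
  proof -
    have e: "2*real l - 2 = 2*(real l - 1)" by simp
    have gen: "\<And>D::real. 0 < D \<Longrightarrow> D * (1/(4*D))^3/12 = 1/(2*D)^2/192"
      by (simp add: field_simps power2_eq_square power3_eq_cube)
    show ?thesis unfolding rl h2_def f2_def e using gen[OF lp] by simp
  qed
  have v3: "real (m-1) * (2*h3)^3/12 + (1 - (1-h3))^3/3 = f3 m/192"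
  proof -
    have gen: "\<And>D::real. 0 < D \<Longrightarrow> ((D-1)/2) * (2*(1/(2*D)))^3/12 + (1 - (1 - 1/(2*D)))^3/3 = 8/D^2/192"
      by (simp add: field_simps power2_eq_square power3_eq_cube)
    have e: "real m - 1 = ((2*real m - 1) - 1)/2" by simp
    show ?thesis unfolding rm h3_def f3_def e using gen[OF mp] by simp
  qed
  have "integral {0..1} (mind T) \<le> (f1 k + f2 l + f3 m)/192"
    using I1a I1b I2 I3a I3b c1 c2 c3 c4 v1 v2 v3 unfolding add_divide_distrib by linarith
  then show ?thesis using fin\<alpha> card unfolding T_def by blast
qed


lemma dist_nonneg: "finite G \<Longrightarrow> G \<noteq> {} \<Longrightarrow> 0 \<le> distortion unif01 G"
  by (simp add: distortion_eq integral_nonneg mind_int mind_nonneg)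

lemma main_gen:
  fixes n a1 a2 a3 :: nat and \<alpha>n :: "real set"
  assumes opt: "cond_optimal_set unif01 {1/4, 1/2} n \<alpha>n"
    and tgt: "a1 + a2 + a3 = n + 2" "1 \<le> a1" "2 \<le> a2" "1 \<le> a3"
    and cls: "\<And>y1 y2 y3. 1 \<le> y1 \<Longrightarrow> 2 \<le> y2 \<Longrightarrow> 1 \<le> y3 \<Longrightarrow> y1 + y2 + y3 \<le> a1 + a2 + a3 \<Longrightarrow>
       f1 y1 + f2 y2 + f3 y3 \<le> f1 a1 + f2 a2 + f3 a3 \<Longrightarrow> y1 = a1 \<and> y2 = a2 \<and> y3 = a3"
  shows "card (\<alpha>n \<inter> {0..1/4}) = a1 \<and> card (\<alpha>n \<inter> {1/4..1/2}) = a2 \<and> card (\<alpha>n \<inter> {1/2..1}) = a3"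
proof -
  define \<beta> where "\<beta> = {1/4, 1/2::real}"
  have cb: "card \<beta> = 2" by (simp add: \<beta>_def)
  from opt obtain \<alpha> where \<alpha>: "finite \<alpha>" "card \<alpha> \<le> n - 2" "\<alpha>n = \<alpha> \<union> \<beta>"
    and dist: "distortion unif01 \<alpha>n = cond_qerror unif01 \<beta> n"
    unfolding cond_optimal_set_def \<beta>_def[symmetric] cb by auto
  have fin: "finite \<alpha>n" using \<alpha> by (simp add: \<beta>_def)
  have q: "1/4 \<in> \<alpha>n" and h: "1/2 \<in> \<alpha>n" using \<alpha> by (auto simp: \<beta>_def)
  have "card \<alpha>n \<le> card \<alpha> + card \<beta>" unfolding \<alpha>(3) by (rule card_Un_le)
  then have cardG: "card \<alpha>n \<le> n" using \<alpha>(2) cb tgt by linarith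
  obtain \<alpha>T where T: "finite \<alpha>T" "card \<alpha>T \<le> a1 + a2 + a3 - 4"
    "integral {0..1} (mind (\<alpha>T \<union> {1/4, 1/2})) \<le> (f1 a1 + f2 a2 + f3 a3)/192"
    using upper_all[OF tgt(2-4)] by blast
  have "cond_qerror unif01 \<beta> n \<le> distortion unif01 (\<alpha>T \<union> \<beta>)"
    unfolding cond_qerror_def
  proof (rule cInf_lower)
    show "distortion unif01 (\<alpha>T \<union> \<beta>) \<in> {distortion unif01 (\<alpha> \<union> \<beta>) |\<alpha>. finite \<alpha> \<and> card \<alpha> \<le> n - card \<beta>}"
      using T tgt cb by auto
    show "bdd_below {distortion unif01 (\<alpha> \<union> \<beta>) |\<alpha>. finite \<alpha> \<and> card \<alpha> \<le> n - card \<beta>}"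
      by (rule bdd_belowI[of _ 0]) (auto intro!: dist_nonneg simp: \<beta>_def)
  qed
  also have "\<dots> = integral {0..1} (mind (\<alpha>T \<union> \<beta>))"
    using T by (intro distortion_eq) (auto simp: \<beta>_def)
  finally have C: "cond_qerror unif01 \<beta> n \<le> integral {0..1} (mind (\<alpha>T \<union> \<beta>))" .
  have G0: "\<alpha>n \<noteq> {}" using q by auto
  have D: "integral {0..1} (mind \<alpha>n) = cond_qerror unif01 \<beta> n"
    using dist distortion_eq[OF fin G0] by simp
  have UB: "integral {0..1} (mind \<alpha>n) \<le> (f1 a1 + f2 a2 + f3 a3)/192"
    using C D T(3) unfolding \<beta>_def by linarith
  define k where "k = card (\<alpha>n \<inter> {0..1/4})"
  define l where "l = card (\<alpha>n \<inter> {1/4..1/2})"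
  define m where "m = card (\<alpha>n \<inter> {1/2..1})"
  define e1 where "e1 = (\<alpha>n \<inter> {..<0} \<noteq> {})"
  define e2 where "e2 = (\<alpha>n \<inter> {1<..} \<noteq> {})"
  note LA = lower_all[OF fin q h, folded k_def l_def m_def e1_def e2_def]
  define L1 where "L1 = (if e1 then 1/(2*real k)^2 else f1 k)"
  define R3 where "R3 = (if e2 then 8/(2*real m)^2 else f3 m)"
  define y1 where "y1 = k + (if e1 then 1 else 0)"
  define y3 where "y3 = m + (if e2 then 1 else 0)"
  have LB: "L1 + f2 l + R3 \<le> f1 a1 + f2 a2 + f3 a3"
    using LA(2) UB unfolding L1_def R3_def by simp
  have kp: "0 < real k" and mp: "0 < real m" using LA(3,5) by auto
  have s1: "e1 \<Longrightarrow> f1 y1 < L1"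
  proof -
    assume e1
    have "(2*real k)^2 < (2*real k + 1)^2" using kp by (intro power_strict_mono) auto
    then have "1/(2*real k + 1)^2 < 1/(2*real k)^2" using kp by (intro divide_strict_left_mono) auto
    then show ?thesis using \<open>e1\<close> unfolding y1_def L1_def f1_def by (simp add: algebra_simps)
  qed
  have s3: "e2 \<Longrightarrow> f3 y3 < R3"
  proof -
    assume e2
    have "(2*real m)^2 < (2*real m + 1)^2" using mp by (intro power_strict_mono) auto
    then have "8/(2*real m + 1)^2 < 8/(2*real m)^2" using mp by (intro divide_strict_left_mono) auto
    then show ?thesis using \<open>e2\<close> unfolding y3_def R3_def f3_def by (simp add: algebra_simps)
  qed
  have n1: "\<not> e1 \<Longrightarrow> f1 y1 = L1" unfolding y1_def L1_def by simp
  have n3: "\<not> e2 \<Longrightarrow> f3 y3 = R3" unfolding y3_def R3_def by simp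
  have le1: "f1 y1 \<le> L1" using s1 n1 by (cases e1) auto
  have le3: "f3 y3 \<le> R3" using s3 n3 by (cases e2) auto
  have ysum: "y1 + l + y3 \<le> a1 + a2 + a3"
    using LA(1) cardG tgt(1) unfolding y1_def y3_def by linarith
  have eq: "y1 = a1 \<and> l = a2 \<and> y3 = a3"
    by (rule cls) (use LA(3-5) ysum LB le1 le3 in \<open>auto simp: y1_def y3_def\<close>)
  then have Feq: "f1 y1 + f2 l + f3 y3 = f1 a1 + f2 a2 + f3 a3" by simp
  have "\<not> e1" using s1 le3 LB Feq by (cases e1) auto
  moreover have "\<not> e2" using s3 le1 LB Feq by (cases e2) auto
  ultimately show ?thesis using eq unfolding y1_def y3_def k_def l_def m_def by simp
qed

theorem theorem3p8:
  fixes n :: nat and \<alpha>n :: "real set"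
  assumes "n \<ge> 6"
    and "cond_optimal_set unif01 {1/4, 1/2} n \<alpha>n"
  defines "k \<equiv> card (\<alpha>n \<inter> {0..1/4})"
    and "l \<equiv> card (\<alpha>n \<inter> {1/4..1/2})"
    and "m \<equiv> card (\<alpha>n \<inter> {1/2..1})"
  shows "(\<forall>x::nat. n = 4*x + 2 \<longrightarrow> (k, l, m) = (x + 1, x + 2, 2*x + 1)) \<and>
         (\<forall>x::nat. n = 4*x + 3 \<longrightarrow> (k, l, m) = (x + 1, x + 2, 2*x + 2)) \<and>
         (\<forall>x::nat. n = 4*x + 4 \<longrightarrow> (k, l, m) = (x + 2, x + 2, 2*x + 2)) \<and>
         (\<forall>x::nat. n = 4*x + 5 \<longrightarrow> (k, l, m) = (x + 2, x + 2, 2*x + 3))"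
proof (intro conjI allI impI)
  fix x :: nat
  assume nx: "n = 4*x + 2"
  then have x: "1 \<le> x" using assms(1) by simp
  have "k = x + 1 \<and> l = x + 2 \<and> m = 2 * x + 1"
    unfolding k_def l_def m_def
    by (rule main_gen[OF assms(2)]) (use nx x class_2[OF x] in auto)
  then show "(k, l, m) = (x + 1, x + 2, 2*x + 1)" by simp
next
  fix x :: nat
  assume nx: "n = 4*x + 3"
  then have x: "1 \<le> x" using assms(1) by simp
  have "k = x + 1 \<and> l = x + 2 \<and> m = 2 * x + 2"
    unfolding k_def l_def m_def
    by (rule main_gen[OF assms(2)]) (use nx x class_3[OF x] in auto)
  then show "(k, l, m) = (x + 1, x + 2, 2*x + 2)" by simp
next
  fix x :: nat
  assume nx: "n = 4*x + 4"
  then have x: "1 \<le> x" using assms(1) by simp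
  have "k = x + 2 \<and> l = x + 2 \<and> m = 2 * x + 2"
    unfolding k_def l_def m_def
    by (rule main_gen[OF assms(2)]) (use nx x class_4[OF x] in auto)
  then show "(k, l, m) = (x + 2, x + 2, 2*x + 2)" by simp
next
  fix x :: nat
  assume nx: "n = 4*x + 5"
  then have x: "1 \<le> x" using assms(1) by simp
  have "k = x + 2 \<and> l = x + 2 \<and> m = 2 * x + 3"
    unfolding k_def l_def m_def
    by (rule main_gen[OF assms(2)]) (use nx x class_5[OF x] in auto)
  then show "(k, l, m) = (x + 2, x + 2, 2*x + 3)" by simp
qed


end
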